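(* Let $n\ge2$, $b\ge2$. Let $\mu_1,\mu_2,\dots$ be i.i.d. random permutations in $S_n$ with law $Q_b$, and define $\tau_0=\mathrm{id}$ and $\tau_r=\tau_{r-1}\circ\mu_r$ (i.e. $\tau_r(p)=\tau_{r-1}(\mu_r(p))$), the arrangement after $r$ successive $b$-shuffles. Then $(d(\tau_r^{-1}))_{r\ge0}$ is a Markov chain on $\{0,\dots,n-1\}$ with stationary distribution $\pi(j)=A(n,j)/n!$, and its transition matrix $K$ satisfies $K(i,j)=\pi(j)P_b(j,i)/\pi(i)$ for all $i,j$; that is, the formal time reversal of this chain with respect to $\pi$ is exactly the base-$b$ carries chain $P_b$.
   Context: For $\sigma\in S_n$, $\sigma$ has a descent at $i$ ($1\le i\le n-1$) if $\sigma(i+1)<\sigma(i)$; $d(\sigma)$ is the number of descents, and $A(n,j)$ (Eulerian number) is the number of $\sigma\in S_n$ with $d(\sigma)=j$. Binomial convention: $\binom{m}{n}=\frac{m(m-1)\cdots(m-n+1)}{n!}$ if $m\ge n$, and $0$ if $m<n$. The $b$-shuffle measure is $Q_b(\sigma)=\binom{n+b-d(\sigma^{-1})-1}{n}/b^n$ on $S_n$. The base-$b$ carries chain for adding $n$ numbers is the Markov chain on $\{0,\dots,n-1\}$ given by $\kappa_0=0$, $\kappa_{t+1}=\lfloor(\kappa_t+X_{t+1,1}+\dots+X_{t+1,n})/b\rfloor$ with $X_{t,k}$ i.i.d. uniform on $\{0,\dots,b-1\}$; its transition matrix is $P_b(i,j)=b^{-n}\sum_{l=0}^{j-\lfloor i/b\rfloor}(-1)^l\binom{n+1}{l}\binom{n-1-i+(j+1-l)b}{n}$.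 *)

theory Defs
  imports Complex_Main "HOL-Combinatorics.Permutations"
begin

definition des :: "nat \<Rightarrow> (nat \<Rightarrow> nat) \<Rightarrow> nat" where
  "des n \<sigma> = card {i \<in> {1..n-1}. \<sigma> (i+1) < \<sigma> i}"

definition eulerian :: "nat \<Rightarrow> nat \<Rightarrow> nat" where
  "eulerian n j = card {\<sigma>. \<sigma> permutes {1..n} \<and> des n \<sigma> = j}"

text \<open>Binomial with the paper's convention (m >= n: falling factorial / n!, else 0).\<close>
definition ibinom :: "int \<Rightarrow> nat \<Rightarrow> real" where
  "ibinom m k = (if m \<ge> int k then real (nat m choose k) else 0)"

definition Qb :: "nat \<Rightarrow> nat \<Rightarrow> (nat \<Rightarrow> nat) \<Rightarrow> real" where
  "Qb n b \<sigma> = ibinom (int n + int b - int (des n (inv \<sigma>)) - 1) n / real b ^ n"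

definition carries :: "nat \<Rightarrow> nat \<Rightarrow> nat \<Rightarrow> nat \<Rightarrow> real" where
  "carries n b i j = (\<Sum>l\<in>{0..int j - int (i div b)}.
      (-1) ^ nat l * real ((n+1) choose nat l)
      * ibinom (int n - 1 - int i + (int j + 1 - l) * int b) n) / real b ^ n"

definition pi_eul :: "nat \<Rightarrow> nat \<Rightarrow> real" where
  "pi_eul n j = real (eulerian n j) / fact n"

text \<open>tau_k = mu_1 o ... o mu_k for the list ms = [mu_1, ..., mu_r].\<close>
definition tau :: "(nat \<Rightarrow> nat) list \<Rightarrow> nat \<Rightarrow> (nat \<Rightarrow> nat)" where
  "tau ms k = foldl (\<circ>) id (take k ms)"

text \<open>P(D_0 = js!0, ..., D_r = js!r) where r = length js - 1, D_k = d(tau_k^{-1}),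
  mu_1..mu_r i.i.d. with law Q_b (joint law = product of Q_b over S_n^r).\<close>
definition pathprob :: "nat \<Rightarrow> nat \<Rightarrow> nat list \<Rightarrow> real" where
  "pathprob n b js =
     (\<Sum>ms \<in> {ms. length ms = length js - 1 \<and> (\<forall>\<mu>\<in>set ms. \<mu> permutes {1..n})}.
        (\<Prod>k<length ms. Qb n b (ms ! k))
        * (if (\<forall>k<length js. des n (inv (tau ms k)) = js ! k) then 1 else 0))"

end

theory Submission
  imports Defs "HOL-Library.FuncSet"
begin

lemma ibinom_alt: "ibinom m k = (if 0 \<le> m then real (nat m choose k) else 0)"
  by (auto simp: ibinom_def binomial_eq_0)

lemma ibinom_pascal: "ibinom (m+1) (Suc k) = ibinom m k + ibinom m (Suc k)"
proof (cases "m \<ge> 0")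
  case True
  then have "nat (m+1) = Suc (nat m)" by auto
  then show ?thesis using True by (simp add: ibinom_alt)
next
  case False
  then show ?thesis by (cases "m = -1") (auto simp: ibinom_alt)
qed

lemma ibinom_0: "ibinom m 0 = (if 0 \<le> m then 1 else 0)"
  by (simp add: ibinom_alt)

lemma ibinom_hockey:
  "(\<Sum>x<c. ibinom (w - int x) K) = ibinom (w + 1) (Suc K) - ibinom (w + 1 - int c) (Suc K)"
proof (induction c)
  case 0 then show ?case by simp
next
  case (Suc c)
  have "ibinom (w - int c + 1) (Suc K) = ibinom (w - int c) K + ibinom (w - int c) (Suc K)"
    by (rule ibinom_pascal)
  then have p: "ibinom (w + 1 - int c) (Suc K) = ibinom (w - int c) K + ibinom (w - int c) (Suc K)"
    by (simp add: algebra_simps)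
  have q: "w + 1 - int (Suc c) = w - int c" by simp
  have "(\<Sum>x<Suc c. ibinom (w - int x) K) = (\<Sum>x<c. ibinom (w - int x) K) + ibinom (w - int c) K"
    by simp
  then show ?case unfolding q using Suc p by linarith
qed

definition Ls :: "nat \<Rightarrow> nat \<Rightarrow> nat list set" where
  "Ls b N = {xs. set xs \<subseteq> {..<b} \<and> length xs = N}"

lemma Ls_finite: "finite (Ls b N)"
  unfolding Ls_def using finite_lists_length_eq[of "{..<b}" N] by simp

lemma Ls_card: "card (Ls b N) = b ^ N"
  unfolding Ls_def using card_lists_length_eq[of "{..<b}" N] by simp

lemma sum_Ls_Suc:
  "(\<Sum>xs\<in>Ls b (Suc N). h xs) = (\<Sum>x<b. \<Sum>ys\<in>Ls b N. h (x # ys))"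
proof -
  have e: "Ls b (Suc N) = (\<lambda>(ys, x). x # ys) ` (Ls b N \<times> {..<b})"
    unfolding Ls_def by (rule lists_length_Suc_eq)
  have i: "inj_on (\<lambda>(ys, x). x # ys) (Ls b N \<times> {..<b})"
    by (auto simp: inj_on_def)
  have "(\<Sum>xs\<in>Ls b (Suc N). h xs) = (\<Sum>p\<in>Ls b N \<times> {..<b}. h (snd p # fst p))"
    unfolding e by (subst sum.reindex[OF i]) (simp add: case_prod_beta)
  also have "\<dots> = (\<Sum>(ys,x)\<in>Ls b N \<times> {..<b}. h (x # ys))"
    by (simp add: case_prod_beta)
  also have "\<dots> = (\<Sum>ys\<in>Ls b N. \<Sum>x<b. h (x # ys))"
    by (rule sum.cartesian_product[symmetric])
  also have "\<dots> = (\<Sum>x<b. \<Sum>ys\<in>Ls b N. h (x # ys))"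
    by (rule sum.swap)
  finally show ?thesis .
qed

definition cnt :: "nat \<Rightarrow> nat \<Rightarrow> int \<Rightarrow> real" where
  "cnt b N s = (\<Sum>xs\<in>Ls b N. if int (sum_list xs) = s then 1 else 0)"

lemma cnt_Suc: "cnt b (Suc N) s = (\<Sum>x<b. cnt b N (s - int x))"
  unfolding cnt_def sum_Ls_Suc
  by (intro sum.cong refl) (auto intro!: sum.cong)

lemma alt_binom_shift:
  fixes f :: "nat \<Rightarrow> real"
  shows "(\<Sum>l\<le>Suc m. (-1)^l * real (Suc m choose l) * f l)
       = (\<Sum>l\<le>m. (-1)^l * real (m choose l) * (f l - f (Suc l)))"
proof -
  have A0: "(\<Sum>l\<le>Suc m. (-1)^l * real (Suc m choose l) * f l)
      = f 0 + (\<Sum>l\<le>m. (-1)^(Suc l) * real (Suc m choose Suc l) * f (Suc l))"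
    by (subst sum.atMost_Suc_shift) simp
  have A1: "(\<Sum>l\<le>m. (-1)^(Suc l) * real (Suc m choose Suc l) * f (Suc l)) = (\<Sum>l\<le>m. (-1)^(Suc l) * real (m choose l) * f (Suc l)
                 + (-1)^(Suc l) * real (m choose Suc l) * f (Suc l))"
    by (simp add: algebra_simps)
  have A2: "(\<Sum>l\<le>m. (-1)^(Suc l) * real (m choose l) * f (Suc l)
                 + (-1)^(Suc l) * real (m choose Suc l) * f (Suc l)) = (\<Sum>l\<le>m. (-1)^(Suc l) * real (m choose l) * f (Suc l))
                 + (\<Sum>l\<le>m. (-1)^(Suc l) * real (m choose Suc l) * f (Suc l))"
    by (simp only: sum.distrib)
  have B0: "(\<Sum>l\<le>Suc m. (-1)^l * real (m choose l) * f l) = f 0 + (\<Sum>l\<le>m. (-1)^(Suc l) * real (m choose Suc l) * f (Suc l))"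
    by (subst sum.atMost_Suc_shift) simp
  have B1: "(\<Sum>l\<le>Suc m. (-1)^l * real (m choose l) * f l) = (\<Sum>l\<le>m. (-1)^l * real (m choose l) * f l)"
    by simp
  have C0: "(\<Sum>l\<le>m. (-1)^l * real (m choose l) * (f l - f (Suc l))) =
     (\<Sum>l\<le>m. (-1)^l * real (m choose l) * f l + (-1)^(Suc l) * real (m choose l) * f (Suc l))"
    by (simp add: algebra_simps)
  have C1: "(\<Sum>l\<le>m. (-1)^l * real (m choose l) * f l + (-1)^(Suc l) * real (m choose l) * f (Suc l)) =
     (\<Sum>l\<le>m. (-1)^l * real (m choose l) * f l) + (\<Sum>l\<le>m. (-1)^(Suc l) * real (m choose l) * f (Suc l))"
    by (simp only: sum.distrib)
  show ?thesis using A0 A1 A2 B0 B1 C0 C1 by linarith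
qed

lemma ibinom_hockey':
  "w1 = w + 1 \<Longrightarrow> w2 = w + 1 - int c \<Longrightarrow>
   (\<Sum>x<c. ibinom (w - int x) K) = ibinom w1 (Suc K) - ibinom w2 (Suc K)"
  using ibinom_hockey by simp

lemma cnt_formula:
  "cnt b (Suc M) s = (\<Sum>l\<le>Suc M. (-1)^l * real (Suc M choose l) * ibinom (s - int (l*b) + int M) M)"
proof (induction M arbitrary: s)
  case 0
  have "cnt b (Suc 0) s = (if 0 \<le> s \<and> s < int b then 1 else 0)"
  proof -
    have "cnt b (Suc 0) s = (\<Sum>x<b. cnt b 0 (s - int x))" by (rule cnt_Suc)
    also have "\<dots> = (\<Sum>x<b. if s = int x then 1 else 0)"
    proof (intro sum.cong refl)
      fix x assume "x \<in> {..<b}"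
      have "Ls b 0 = {[]}" by (auto simp: Ls_def)
      then show "cnt b 0 (s - int x) = (if s = int x then 1 else 0)" by (simp add: cnt_def)
    qed
    also have "\<dots> = (if 0 \<le> s \<and> s < int b then 1 else 0)"
    proof (cases "0 \<le> s \<and> s < int b")
      case True
      then have "(\<Sum>x<b. if s = int x then (1::real) else 0) = (\<Sum>x\<in>{nat s}. 1)"
        by (intro sum.mono_neutral_cong_right) auto
      then show ?thesis using True by simp
    next
      case False then show ?thesis by (auto intro!: sum.neutral)
    qed
    finally show ?thesis .
  qed
  then show ?case by (simp add: ibinom_0)
next
  case (Suc M)
  have "cnt b (Suc (Suc M)) s = (\<Sum>x<b. cnt b (Suc M) (s - int x))" by (rule cnt_Suc)
  also have "\<dots> = (\<Sum>x<b. \<Sum>l\<le>Suc M. (-1)^l * real (Suc M choose l) * ibinom (s - int x - int (l*b) + int M) M)"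
    using Suc by simp
  also have "\<dots> = (\<Sum>l\<le>Suc M. (-1)^l * real (Suc M choose l) * (\<Sum>x<b. ibinom (s - int (l*b) + int M - int x) M))"
    by (subst sum.swap) (simp add: sum_distrib_left algebra_simps)
  also have "\<dots> = (\<Sum>l\<le>Suc M. (-1)^l * real (Suc M choose l) *
        (ibinom (s - int (l*b) + int (Suc M)) (Suc M) - ibinom (s - int (Suc l * b) + int (Suc M)) (Suc M)))"
  proof (intro sum.cong refl)
    fix l
    have a: "s - int (l*b) + int M + 1 = s - int (l*b) + int (Suc M)" by simp
    have c: "s - int (l*b) + int M + 1 - int b = s - int (Suc l * b) + int (Suc M)" by (simp add: algebra_simps)
    show "(-1)^l * real (Suc M choose l) * (\<Sum>x<b. ibinom (s - int (l*b) + int M - int x) M) =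
       (-1)^l * real (Suc M choose l) *
        (ibinom (s - int (l*b) + int (Suc M)) (Suc M) - ibinom (s - int (Suc l * b) + int (Suc M)) (Suc M))"
      using ibinom_hockey'[OF a[symmetric] c[symmetric]] by simp
  qed
  also have "\<dots> = (\<Sum>l\<le>Suc (Suc M). (-1)^l * real (Suc (Suc M) choose l) * ibinom (s - int (l*b) + int (Suc M)) (Suc M))"
    by (rule alt_binom_shift[symmetric])
  finally show ?case .
qed

lemma div_char_nat: "0 < (b::nat) \<Longrightarrow> (a div b = i) = (i*b \<le> a \<and> a < Suc i * b)"
  by (metis div_less_iff_less_mult div_nat_eqI div_times_less_eq_dividend lessI mult.commute)

lemma sum_int_interval: "(\<Sum>l\<in>{0..t::int}. f l) = (\<Sum>l<nat (t+1). f (int l))"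
proof -
  have e: "{0..t} = int ` {..<nat (t+1)}"
  proof
    show "{0..t} \<subseteq> int ` {..<nat (t+1)}"
    proof
      fix x assume "x \<in> {0..t}"
      then have "x = int (nat x)" "nat x < nat (t+1)" by auto
      then show "x \<in> int ` {..<nat (t+1)}" by blast
    qed
  qed auto
  show ?thesis unfolding e by (subst sum.reindex) auto
qed

lemma inner_indicator:
  assumes "0 < b"
  shows "(\<Sum>x<b. if int x + int S = (int i + 1) * int b - 1 - int j then (1::real) else 0)
        = (if (j + S) div b = i then 1 else 0)"
proof -
  let ?s = "(int i + 1) * int b - 1 - int j - int S"
  have c: "(j + S) div b = i \<longleftrightarrow> 0 \<le> ?s \<and> ?s < int b"
  proof -
    have "(j + S) div b = i \<longleftrightarrow> i*b \<le> j + S \<and> j + S < Suc i * b"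
      using div_char_nat[OF assms] by blast
    also have "\<dots> \<longleftrightarrow> int i * int b \<le> int j + int S \<and> int j + int S < (int i + 1) * int b"
      by (metis of_nat_add of_nat_less_iff of_nat_le_iff of_nat_mult of_nat_Suc add.commute)
    also have "\<dots> \<longleftrightarrow> 0 \<le> ?s \<and> ?s < int b" by (auto simp: algebra_simps)
    finally show ?thesis .
  qed
  show ?thesis
  proof (cases "0 \<le> ?s \<and> ?s < int b")
    case True
    have "(\<Sum>x<b. if int x + int S = (int i + 1) * int b - 1 - int j then (1::real) else 0)
        = (\<Sum>x\<in>{nat ?s}. 1)"
      using True by (intro sum.mono_neutral_cong_right) auto
    then show ?thesis using True c by simp
  next
    case False
    then have "\<And>x. int x + int S \<noteq> (int i + 1) * int b - 1 - int j \<or> \<not> x < b" by auto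
    then have "(\<Sum>x<b. if int x + int S = (int i + 1) * int b - 1 - int j then (1::real) else 0) = 0"
      by (intro sum.neutral) auto
    then show ?thesis using False c by simp
  qed
qed

lemma carries_count:
  assumes "0 < b"
  shows "carries n b j i * real b ^ n = (\<Sum>xs\<in>Ls b n. if (j + sum_list xs) div b = i then 1 else 0)"
proof -
  define s where "s = (int i + 1) * int b - 1 - int j"
  define T where "T l = (-1)^l * real (Suc n choose l) * ibinom (s - int (l*b) + int n) n" for l
  have "(\<Sum>xs\<in>Ls b n. if (j + sum_list xs) div b = i then 1 else 0)
      = (\<Sum>xs\<in>Ls b n. \<Sum>x<b. if int x + int (sum_list xs) = s then (1::real) else 0)"
    unfolding s_def using inner_indicator[OF assms] by simp
  also have "\<dots> = (\<Sum>x<b. \<Sum>xs\<in>Ls b n. if int (sum_list (x # xs)) = s then (1::real) else 0)"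
    by (subst sum.swap) simp
  also have "\<dots> = cnt b (Suc n) s" unfolding cnt_def sum_Ls_Suc ..
  also have "\<dots> = (\<Sum>l\<le>Suc n. T l)" unfolding T_def cnt_formula ..
  finally have R: "(\<Sum>xs\<in>Ls b n. if (j + sum_list xs) div b = i then 1 else 0) = (\<Sum>l\<le>Suc n. T l)" .
  define A where "A = nat (int i - int (j div b) + 1)"
  have L: "carries n b j i * real b ^ n = (\<Sum>l<A. T l)"
  proof -
    have "carries n b j i * real b ^ n = (\<Sum>l\<in>{0..int i - int (j div b)}.
      (-1) ^ nat l * real ((n+1) choose nat l)
      * ibinom (int n - 1 - int j + (int i + 1 - l) * int b) n)"
      using assms by (simp add: carries_def)
    also have "\<dots> = (\<Sum>l<A. (-1) ^ l * real ((n+1) choose l)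
      * ibinom (int n - 1 - int j + (int i + 1 - int l) * int b) n)"
      unfolding A_def sum_int_interval by simp
    also have "\<dots> = (\<Sum>l<A. T l)"
      unfolding T_def s_def by (intro sum.cong refl) (simp add: algebra_simps)
    finally show ?thesis .
  qed
  have Z1: "T l = 0" if "l \<ge> A" for l
  proof -
    have "int i + 1 - int l \<le> int (j div b)" using that unfolding A_def by auto
    then have "(int i + 1 - int l) * int b \<le> int (j div b) * int b"
      using assms by (intro mult_right_mono) auto
    also have "\<dots> \<le> int j"
      by (metis div_times_less_eq_dividend of_nat_le_iff of_nat_mult)
    finally have X: "(int i + 1 - int l) * int b \<le> int j" .
    have "s - int (l*b) + int n = (int i + 1 - int l) * int b - 1 - int j + int n"
      unfolding s_def by (simp add: algebra_simps)
    then have "s - int (l*b) + int n < int n" using X by linarith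
    then have nn: "\<not> int n \<le> s - int (l*b) + int n" by linarith
    show ?thesis unfolding T_def ibinom_def by (simp only: nn if_False mult_zero_right)
  qed
  have Z2: "T l = 0" if "l > Suc n" for l
    unfolding T_def using that by simp
  have "(\<Sum>l<A. T l) = (\<Sum>l<A + Suc (Suc n). T l)"
    by (intro sum.mono_neutral_left) (auto intro: Z1)
  also have "\<dots> = (\<Sum>l\<le>Suc n. T l)"
    by (intro sum.mono_neutral_right) (auto intro: Z2)
  finally show ?thesis using L R by simp
qed

definition epsD :: "(nat \<Rightarrow> bool) \<Rightarrow> nat \<Rightarrow> int" where
  "epsD D k = (if D k then 1 else 0)"

definition lexd :: "(nat \<Rightarrow> bool) \<Rightarrow> (nat \<Rightarrow> nat) \<Rightarrow> nat \<Rightarrow> bool" where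
  "lexd D G k \<longleftrightarrow> G (k+1) < G k \<or> (G (k+1) = G k \<and> D k)"

definition Yv :: "nat \<Rightarrow> (nat \<Rightarrow> bool) \<Rightarrow> (nat \<Rightarrow> nat) \<Rightarrow> nat \<Rightarrow> int" where
  "Yv b D G k = (int (G (k+1)) - int (G k) - epsD D k) mod int b"

definition Xmap :: "nat \<Rightarrow> nat \<Rightarrow> (nat \<Rightarrow> bool) \<Rightarrow> (nat \<Rightarrow> nat) \<Rightarrow> nat list" where
  "Xmap n b D G = G 1 # map (\<lambda>k. nat (Yv b D G k)) [1..<n]"

lemma Yv_step:
  assumes "0 < b" "G k < b" "G (k+1) < b"
  shows "int (G (k+1)) - int (G k) - epsD D k = Yv b D G k - int b * (if lexd D G k then 1 else 0)"
proof -
  let ?d = "int (G (k+1)) - int (G k) - epsD D k"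
  have r: "- int b \<le> ?d" "?d < int b" using assms by (auto simp: epsD_def)
  have lx: "lexd D G k \<longleftrightarrow> ?d < 0" by (auto simp: lexd_def epsD_def)
  show ?thesis
  proof (cases "?d < 0")
    case True
    then have "Yv b D G k = ?d + int b"
    proof -
      have "?d mod int b = (?d + int b) mod int b" by simp
      also have "\<dots> = ?d + int b" using r True by (intro mod_pos_pos_trivial) auto
      finally show ?thesis unfolding Yv_def .
    qed
    then show ?thesis using True lx by simp
  next
    case False
    then have "Yv b D G k = ?d" unfolding Yv_def using r by (simp add: mod_pos_pos_trivial)
    then show ?thesis using False lx by simp
  qed
qed

lemma sum_indicator_card: "finite A \<Longrightarrow> (\<Sum>k\<in>A. if P k then (1::'a::comm_semiring_1) else 0) = of_nat (card {k\<in>A. P k})"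
  by (simp add: sum.If_cases Int_def conj_commute)

lemma filter_insert_card:
  "finite A \<Longrightarrow> m \<notin> A \<Longrightarrow> card {k \<in> insert m A. P k} = card {k\<in>A. P k} + (if P m then 1 else 0)"
proof -
  assume f: "finite A" and m: "m \<notin> A"
  show ?thesis
  proof (cases "P m")
    case True
    then have "{k \<in> insert m A. P k} = insert m {k\<in>A. P k}" by auto
    then show ?thesis using f m True by simp
  next
    case False
    then have "{k \<in> insert m A. P k} = {k\<in>A. P k}" by auto
    then show ?thesis using False by simp
  qed
qed

lemma tele:
  assumes "0 < b" "\<forall>k\<in>{1..n}. G k < b"
  shows "1 \<le> m \<Longrightarrow> m \<le> n \<Longrightarrow> int b * int (card {k\<in>{1..<m}. lexd D G k}) + int (G m)
       = int (G 1) + (\<Sum>k\<in>{1..<m}. Yv b D G k + epsD D k)"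
proof (induction m)
  case 0 then show ?case by simp
next
  case (Suc m)
  show ?case
  proof (cases "m = 0")
    case True then show ?thesis by simp
  next
    case False
    then have IH: "int b * int (card {k\<in>{1..<m}. lexd D G k}) + int (G m)
       = int (G 1) + (\<Sum>k\<in>{1..<m}. Yv b D G k + epsD D k)" using Suc by simp
    have e: "{1..<Suc m} = insert m {1..<m}" using False by auto
    have st: "int (G (m+1)) - int (G m) - epsD D m = Yv b D G m - int b * (if lexd D G m then 1 else 0)"
      using assms Suc.prems False by (intro Yv_step) auto
    have c: "card {k\<in>{1..<Suc m}. lexd D G k} = card {k\<in>{1..<m}. lexd D G k} + (if lexd D G m then 1 else 0)"
      unfolding e by (rule filter_insert_card) auto
    have s: "(\<Sum>k\<in>{1..<Suc m}. Yv b D G k + epsD D k) = (\<Sum>k\<in>{1..<m}. Yv b D G k + epsD D k) + (Yv b D G m + epsD D m)"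
      unfolding e by simp
    show ?thesis
    proof (cases "lexd D G m")
      case True
      then have "int (card {k\<in>{1..<Suc m}. lexd D G k}) = int (card {k\<in>{1..<m}. lexd D G k}) + 1"
        unfolding c by simp
      then have "int b * int (card {k\<in>{1..<Suc m}. lexd D G k}) = int b * int (card {k\<in>{1..<m}. lexd D G k}) + int b"
        by (simp add: algebra_simps)
      then show ?thesis unfolding s using IH st True by simp
    next
      case F: False
      then have "int (card {k\<in>{1..<Suc m}. lexd D G k}) = int (card {k\<in>{1..<m}. lexd D G k})"
        unfolding c by simp
      then show ?thesis unfolding s using IH st F by simp
    qed
  qed
qed

lemma Xmap_sum:
  assumes "0 < b" "1 \<le> n"
  shows "int (sum_list (Xmap n b D G)) = int (G 1) + (\<Sum>k\<in>{1..<n}. Yv b D G k)"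
proof -
  have nn: "\<And>k. 0 \<le> Yv b D G k" unfolding Yv_def using assms by simp
  have "int (sum_list (map (\<lambda>k. nat (Yv b D G k)) [1..<n])) = int (\<Sum>k\<in>{1..<n}. nat (Yv b D G k))"
    by (simp add: sum_set_upt_conv_sum_list_nat[symmetric])
  also have "\<dots> = (\<Sum>k\<in>{1..<n}. Yv b D G k)" using nn by simp
  finally show ?thesis unfolding Xmap_def by simp
qed

lemma Xmap_div:
  assumes "0 < b" "1 \<le> n" "\<forall>k\<in>{1..n}. G k < b" "j = card {k\<in>{1..<n}. D k}"
  shows "(j + sum_list (Xmap n b D G)) div b = card {k\<in>{1..<n}. lexd D G k}"
proof -
  have T: "int b * int (card {k\<in>{1..<n}. lexd D G k}) + int (G n)
       = int (G 1) + (\<Sum>k\<in>{1..<n}. Yv b D G k + epsD D k)"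
    using tele[OF assms(1) assms(3) assms(2) order_refl] by simp
  have E: "(\<Sum>k\<in>{1..<n}. epsD D k) = int j"
    unfolding epsD_def assms(4) by (simp add: sum_indicator_card)
  have "int (j + sum_list (Xmap n b D G)) = int b * int (card {k\<in>{1..<n}. lexd D G k}) + int (G n)"
    using T E Xmap_sum[OF assms(1,2), of D G] by (simp add: sum.distrib)
  then have "j + sum_list (Xmap n b D G) = b * card {k\<in>{1..<n}. lexd D G k} + G n"
    by (metis of_nat_add of_nat_eq_iff of_nat_mult)
  moreover have "G n < b" using assms by auto
  ultimately show ?thesis using assms(1) by simp
qed

abbreviation FS :: "nat \<Rightarrow> nat \<Rightarrow> (nat \<Rightarrow> nat) set" where
  "FS n b \<equiv> PiE {1..n} (\<lambda>_. {..<b})"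

lemma FS_card: "card (FS n b) = b ^ n"
  by (simp add: card_PiE)

lemma FS_finite: "finite (FS n b)"
  by (simp add: finite_PiE)

lemma Xmap_nth: "1 \<le> k \<Longrightarrow> k < n \<Longrightarrow> Xmap n b D G ! k = nat (Yv b D G k)"
  unfolding Xmap_def by (cases k) auto

lemma Xmap_in:
  assumes "0 < b" "1 \<le> n" "G \<in> FS n b"
  shows "Xmap n b D G \<in> Ls b n"
proof -
  have "G 1 < b" using assms by auto
  moreover have "nat (Yv b D G k) < b" for k
    unfolding Yv_def using assms(1) by (simp add: nat_less_iff)
  ultimately show ?thesis unfolding Ls_def Xmap_def using assms(2) by auto
qed

lemma Yv_recover:
  assumes "0 < b" "G (k+1) < b"
  shows "int (G (k+1)) = (Yv b D G k + int (G k) + epsD D k) mod int b"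
proof -
  have "(Yv b D G k + int (G k) + epsD D k) mod int b = (Yv b D G k + (int (G k) + epsD D k)) mod int b"
    by (simp add: add.assoc)
  also have "\<dots> = ((int (G (k+1)) - int (G k) - epsD D k) + (int (G k) + epsD D k)) mod int b"
    unfolding Yv_def by (rule mod_add_left_eq)
  also have "\<dots> = int (G (k+1)) mod int b" by simp
  also have "\<dots> = int (G (k+1))" using assms by simp
  finally show ?thesis by simp
qed

lemma Xmap_inj:
  assumes "0 < b" "1 \<le> n"
  shows "inj_on (Xmap n b D) (FS n b)"
proof
  fix G G' assume G: "G \<in> FS n b" and G': "G' \<in> FS n b" and eq: "Xmap n b D G = Xmap n b D G'"
  have h1: "G 1 = G' 1" using eq unfolding Xmap_def by simp
  have hy: "Yv b D G k = Yv b D G' k" if "1 \<le> k" "k < n" for k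
  proof -
    have "nat (Yv b D G k) = nat (Yv b D G' k)" using eq Xmap_nth[OF that] by metis
    moreover have "0 \<le> Yv b D G k" "0 \<le> Yv b D G' k" unfolding Yv_def using assms by auto
    ultimately show ?thesis by simp
  qed
  have "1 \<le> k \<longrightarrow> k \<le> n \<longrightarrow> G k = G' k" for k
  proof (induction k)
    case 0 then show ?case by simp
  next
    case (Suc k)
    show ?case
    proof (cases "k = 0")
      case True then show ?thesis using h1 by simp
    next
      case False
      show ?thesis
      proof (intro impI)
        assume a: "Suc k \<le> n"
        then have "G (k+1) < b" "G' (k+1) < b" using G G' by auto
        then have "int (G (k+1)) = (Yv b D G k + int (G k) + epsD D k) mod int b"
                  "int (G' (k+1)) = (Yv b D G' k + int (G' k) + epsD D k) mod int b"
          using Yv_recover assms(1) by auto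
        moreover have "G k = G' k" using Suc False a by simp
        moreover have "Yv b D G k = Yv b D G' k" using hy False a by simp
        ultimately show "G (Suc k) = G' (Suc k)" by simp
      qed
    qed
  qed
  then show "G = G'" using G G' by (intro PiE_ext[OF G G']) auto
qed

lemma Xmap_bij:
  assumes "0 < b" "1 \<le> n"
  shows "bij_betw (Xmap n b D) (FS n b) (Ls b n)"
proof -
  have "Xmap n b D ` FS n b \<subseteq> Ls b n" using Xmap_in[OF assms] by auto
  moreover have "card (Xmap n b D ` FS n b) = card (Ls b n)"
  proof -
    have "card (Xmap n b D ` FS n b) = card (FS n b)" by (rule card_image[OF Xmap_inj[OF assms]])
    also have "\<dots> = b ^ n" by (rule FS_card)
    finally show ?thesis by (simp only: Ls_card)
  qed
  ultimately have "Xmap n b D ` FS n b = Ls b n"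
    using Ls_finite by (metis card_subset_eq)
  then show ?thesis using Xmap_inj[OF assms] by (simp add: bij_betw_def)
qed

lemma lex_count:
  assumes "0 < b" "1 \<le> n" "j = card {k\<in>{1..<n}. D k}"
  shows "(\<Sum>G\<in>FS n b. if card {k\<in>{1..<n}. lexd D G k} = i then 1 else 0) = carries n b j i * real b ^ n"
proof -
  have "(\<Sum>G\<in>FS n b. if card {k\<in>{1..<n}. lexd D G k} = i then (1::real) else 0)
      = (\<Sum>G\<in>FS n b. if (j + sum_list (Xmap n b D G)) div b = i then 1 else 0)"
  proof (intro sum.cong refl)
    fix G assume "G \<in> FS n b"
    then have "\<forall>k\<in>{1..n}. G k < b" by auto
    then have "(j + sum_list (Xmap n b D G)) div b = card {k\<in>{1..<n}. lexd D G k}"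
      by (rule Xmap_div[OF assms(1,2) _ assms(3)])
    then show "(if card {k\<in>{1..<n}. lexd D G k} = i then (1::real) else 0)
      = (if (j + sum_list (Xmap n b D G)) div b = i then 1 else 0)" by simp
  qed
  also have "\<dots> = (\<Sum>xs\<in>Ls b n. if (j + sum_list xs) div b = i then 1 else 0)"
    by (rule sum.reindex_bij_betw[OF Xmap_bij[OF assms(1,2)], of "\<lambda>xs. if (j + sum_list xs) div b = i then 1 else 0"])
  also have "\<dots> = carries n b j i * real b ^ n" using carries_count[OF assms(1)] by simp
  finally show ?thesis .
qed

definition ee :: "(nat \<Rightarrow> bool) \<Rightarrow> nat \<Rightarrow> nat" where
  "ee D k = (if D k then 1 else 0)"

definition cc :: "(nat \<Rightarrow> bool) \<Rightarrow> nat \<Rightarrow> nat" where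
  "cc D k = card {p\<in>{1..<k}. D p}"

definition cmpt :: "nat \<Rightarrow> (nat \<Rightarrow> bool) \<Rightarrow> (nat \<Rightarrow> nat) \<Rightarrow> bool" where
  "cmpt n D x \<longleftrightarrow> (\<forall>k\<in>{1..<n}. x k + ee D k \<le> x (k+1))"

definition zf :: "nat \<Rightarrow> nat \<Rightarrow> (nat \<Rightarrow> bool) \<Rightarrow> (nat \<Rightarrow> nat) \<Rightarrow> nat \<Rightarrow> nat" where
  "zf n b D x i = (if i = 0 then x 1 else if i < n then x (i+1) - x i - ee D i else b - 1 - x n)"

definition zl :: "nat \<Rightarrow> nat \<Rightarrow> (nat \<Rightarrow> bool) \<Rightarrow> (nat \<Rightarrow> nat) \<Rightarrow> nat list" where
  "zl n b D x = map (zf n b D x) [0..<Suc n]"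

definition xf :: "nat \<Rightarrow> (nat \<Rightarrow> bool) \<Rightarrow> nat list \<Rightarrow> nat \<Rightarrow> nat" where
  "xf n D z k = (if k \<in> {1..n} then (\<Sum>i<k. z ! i) + cc D k else undefined)"

lemma cc_Suc: "1 \<le> k \<Longrightarrow> cc D (Suc k) = cc D k + ee D k"
proof -
  assume k: "1 \<le> k"
  have e: "{1..<Suc k} = insert k {1..<k}" using k by auto
  have "cc D (Suc k) = card {p\<in>insert k {1..<k}. D p}" unfolding cc_def e ..
  also have "\<dots> = card {p\<in>{1..<k}. D p} + (if D k then 1 else 0)" by (rule filter_insert_card) auto
  finally show ?thesis unfolding cc_def ee_def .
qed

lemma cc_1: "cc D 1 = 0" by (simp add: cc_def)

lemma zf_partial:
  assumes "cmpt n D x"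
  shows "1 \<le> k \<Longrightarrow> k \<le> n \<Longrightarrow> (\<Sum>i<k. zf n b D x i) + cc D k = x k"
proof (induction k)
  case 0 then show ?case by simp
next
  case (Suc k)
  show ?case
  proof (cases "k = 0")
    case True then show ?thesis by (simp add: zf_def cc_def)
  next
    case False
    then have IH: "(\<Sum>i<k. zf n b D x i) + cc D k = x k" using Suc by simp
    have c: "x k + ee D k \<le> x (k+1)" using assms Suc.prems False unfolding cmpt_def by auto
    have "zf n b D x k = x (k+1) - x k - ee D k" using False Suc.prems by (simp add: zf_def)
    then show ?thesis using IH c cc_Suc[of k D] False by simp
  qed
qed

lemma zl_sum:
  assumes "cmpt n D x" "1 \<le> n" "x n < b"
  shows "int (sum_list (zl n b D x)) = int b - 1 - int (cc D n)"
proof -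
  have "sum_list (zl n b D x) = (\<Sum>i<Suc n. zf n b D x i)"
    unfolding zl_def sum_set_upt_conv_sum_list_nat[symmetric] by (simp add: atLeast0LessThan)
  also have "\<dots> = (\<Sum>i<n. zf n b D x i) + (b - 1 - x n)"
    using assms(2) by (simp add: zf_def)
  finally show ?thesis using zf_partial[OF assms(1) assms(2) order_refl, where b=b] assms(3) by linarith
qed

lemma zl_length: "length (zl n b D x) = Suc n" by (simp add: zl_def)

lemma zl_nth: "i \<le> n \<Longrightarrow> zl n b D x ! i = zf n b D x i"
  unfolding zl_def by (simp del: upt_Suc)

lemma cmpt_count:
  assumes "1 \<le> n" "0 < b"
  shows "card {x\<in>FS n b. cmpt n D x} = ibinom (int n + int b - int (cc D n) - 1) n"
proof (cases "cc D n \<le> b - 1")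
  case False
  have e: "{x\<in>FS n b. cmpt n D x} = {}"
  proof (rule ccontr)
    assume "{x\<in>FS n b. cmpt n D x} \<noteq> {}"
    then obtain x where x: "x \<in> FS n b" "cmpt n D x" by blast
    then have "x n < b" using assms by auto
    then have "int (sum_list (zl n b D x)) = int b - 1 - int (cc D n)" using zl_sum x assms by blast
    then show False using False by linarith
  qed
  moreover have z: "ibinom (int n + int b - int (cc D n) - 1) n = 0"
    using False assms by (simp add: ibinom_def)
  show ?thesis unfolding e z by simp
next
  case True
  define N where "N = b - 1 - cc D n"
  let ?Z = "{l::nat list. length l = Suc n \<and> sum_list l = N}"
  have bij: "bij_betw (zl n b D) {x\<in>FS n b. cmpt n D x} ?Z"
  proof (rule bij_betw_byWitness[where f'="xf n D"])
    show "\<forall>x\<in>{x\<in>FS n b. cmpt n D x}. xf n D (zl n b D x) = x"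
    proof
      fix x assume x: "x \<in> {x\<in>FS n b. cmpt n D x}"
      show "xf n D (zl n b D x) = x"
      proof
        fix k
        show "xf n D (zl n b D x) k = x k"
        proof (cases "k \<in> {1..n}")
          case True
          have "(\<Sum>i<k. zl n b D x ! i) = (\<Sum>i<k. zf n b D x i)"
            using True by (intro sum.cong refl) (simp add: zl_nth)
          then show ?thesis using True zf_partial[of n D x k b] x unfolding xf_def by auto
        next
          case False then show ?thesis using x unfolding xf_def by (auto simp: PiE_def extensional_def)
        qed
      qed
    qed
    show "\<forall>z\<in>?Z. zl n b D (xf n D z) = z"
    proof
      fix z assume z: "z \<in> ?Z"
      have sz: "(\<Sum>i<n. z ! i) + z ! n = N"
      proof -
        have "N = sum_list z" using z by simp
        also have "\<dots> = (\<Sum>i<Suc n. z ! i)" using z by (simp add: sum_list_sum_nth atLeast0LessThan)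
        finally show ?thesis by simp
      qed
      show "zl n b D (xf n D z) = z"
      proof (rule nth_equalityI)
        show "length (zl n b D (xf n D z)) = length z" using z by (simp add: zl_length)
        fix i assume "i < length (zl n b D (xf n D z))"
        then have i: "i \<le> n" by (simp add: zl_length)
        have "zf n b D (xf n D z) i = z ! i"
        proof (cases "i = 0")
          case True then show ?thesis using assms by (simp add: zf_def xf_def cc_def)
        next
          case i0: False
          show ?thesis
          proof (cases "i < n")
            case True
            have "xf n D z (i+1) = (\<Sum>j<i. z ! j) + z ! i + cc D i + ee D i"
              using True i0 cc_Suc[of i D] unfolding xf_def by simp
            moreover have "xf n D z i = (\<Sum>j<i. z ! j) + cc D i" using True i0 unfolding xf_def by simp
            ultimately show ?thesis using True i0 by (simp add: zf_def)
          next
            case False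
            then have ii: "i = n" using i by simp
            have "xf n D z n = (\<Sum>j<n. z ! j) + cc D n" using assms unfolding xf_def by simp
            then show ?thesis using ii i0 sz unfolding zf_def N_def by simp
          qed
        qed
        then show "zl n b D (xf n D z) ! i = z ! i" using i by (simp add: zl_nth)
      qed
    qed
    show "zl n b D ` {x\<in>FS n b. cmpt n D x} \<subseteq> ?Z"
    proof
      fix z assume "z \<in> zl n b D ` {x\<in>FS n b. cmpt n D x}"
      then obtain x where x: "x \<in> FS n b" "cmpt n D x" and z: "z = zl n b D x" by blast
      have "x n < b" using x assms by auto
      then have "int (sum_list z) = int b - 1 - int (cc D n)" using zl_sum x assms z by blast
      then have "sum_list z = N" unfolding N_def using True by linarith
      then show "z \<in> ?Z" using z zl_length by simp
    qed
    show "xf n D ` ?Z \<subseteq> {x\<in>FS n b. cmpt n D x}"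
    proof
      fix y assume "y \<in> xf n D ` ?Z"
      then obtain z where z: "z \<in> ?Z" and y: "y = xf n D z" by blast
      have sz: "(\<Sum>i<n. z ! i) + z ! n = N"
      proof -
        have "N = sum_list z" using z by simp
        also have "\<dots> = (\<Sum>i<Suc n. z ! i)" using z by (simp add: sum_list_sum_nth atLeast0LessThan)
        finally show ?thesis by simp
      qed
      have "y \<in> FS n b"
      proof (rule PiE_I)
        fix k assume k: "k \<in> {1..n}"
        have "(\<Sum>i<k. z ! i) \<le> (\<Sum>i<n. z ! i)" using k by (intro sum_mono2) auto
        moreover have "cc D k \<le> cc D n" unfolding cc_def using k by (intro card_mono) auto
        ultimately have "y k \<le> N + cc D n" using y k sz unfolding xf_def by simp
        then show "y k \<in> {..<b}" using True assms unfolding N_def by simp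
      next
        fix k assume "k \<notin> {1..n}" then show "y k = undefined" using y unfolding xf_def by auto
      qed
      moreover have "cmpt n D y"
        unfolding cmpt_def
      proof
        fix k assume k: "k \<in> {1..<n}"
        have "y (k+1) = (\<Sum>j<k. z ! j) + z ! k + cc D k + ee D k"
          using k cc_Suc[of k D] y unfolding xf_def by simp
        moreover have "y k = (\<Sum>j<k. z ! j) + cc D k" using k y unfolding xf_def by simp
        ultimately show "y k + ee D k \<le> y (k+1)" by simp
      qed
      ultimately show "y \<in> {x\<in>FS n b. cmpt n D x}" by simp
    qed
  qed
  have "card {x\<in>FS n b. cmpt n D x} = card ?Z" using bij by (rule bij_betw_same_card)
  also have "\<dots> = (N + n) choose N" using card_length_sum_list[of "Suc n" N] by simp
  also have "\<dots> = (N + n) choose n" using binomial_symmetric[of N "N+n"] by simp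
  moreover have "nat (int n + int b - int (cc D n) - 1) = N + n" unfolding N_def using True assms by linarith
  ultimately show ?thesis using True assms unfolding ibinom_def by auto
qed

definition lexlt :: "(nat \<Rightarrow> nat) \<Rightarrow> nat \<Rightarrow> nat \<Rightarrow> bool" where
  "lexlt F a c \<longleftrightarrow> F a < F c \<or> (F a = F c \<and> a < c)"

definition rk :: "nat \<Rightarrow> (nat \<Rightarrow> nat) \<Rightarrow> nat \<Rightarrow> nat" where
  "rk n F m = (if m \<in> {1..n} then Suc (card {m'\<in>{1..n}. lexlt F m' m}) else m)"

lemma lexlt_trans: "lexlt F a c \<Longrightarrow> lexlt F c e \<Longrightarrow> lexlt F a e"
  unfolding lexlt_def by auto

lemma lexlt_irrefl: "\<not> lexlt F a a" unfolding lexlt_def by auto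

lemma lexlt_asym: "lexlt F a c \<Longrightarrow> \<not> lexlt F c a" unfolding lexlt_def by auto

lemma lexlt_total: "a \<noteq> c \<Longrightarrow> lexlt F a c \<or> lexlt F c a" unfolding lexlt_def by auto

lemma rk_mono:
  assumes "a \<in> {1..n}" "c \<in> {1..n}" "lexlt F a c"
  shows "rk n F a < rk n F c"
proof -
  have "{m'\<in>{1..n}. lexlt F m' a} \<subset> {m'\<in>{1..n}. lexlt F m' c}"
    using assms lexlt_trans[of F _ a c] lexlt_irrefl[of F a] by auto
  then have "card {m'\<in>{1..n}. lexlt F m' a} < card {m'\<in>{1..n}. lexlt F m' c}"
    by (intro psubset_card_mono) auto
  then show ?thesis using assms unfolding rk_def by simp
qed

lemma rk_less_iff:
  assumes "a \<in> {1..n}" "c \<in> {1..n}"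
  shows "rk n F a < rk n F c \<longleftrightarrow> lexlt F a c"
proof
  assume l: "rk n F a < rk n F c"
  show "lexlt F a c"
  proof (rule ccontr)
    assume "\<not> lexlt F a c"
    then have "a = c \<or> lexlt F c a" using lexlt_total by blast
    then show False using l rk_mono[OF assms(2,1), of F] by auto
  qed
qed (rule rk_mono[OF assms])

lemma rk_range:
  assumes "a \<in> {1..n}"
  shows "rk n F a \<in> {1..n}"
proof -
  have "{m'\<in>{1..n}. lexlt F m' a} \<subseteq> {1..n} - {a}" using lexlt_irrefl[of F a] by auto
  then have "card {m'\<in>{1..n}. lexlt F m' a} \<le> card ({1..n} - {a})" by (intro card_mono) auto
  then have "card {m'\<in>{1..n}. lexlt F m' a} \<le> n - 1" using assms by simp
  then show ?thesis using assms unfolding rk_def by auto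
qed

lemma rk_permutes: "rk n F permutes {1..n}"
proof -
  have inj: "inj_on (rk n F) {1..n}"
  proof
    fix a c assume a: "a \<in> {1..n}" and c: "c \<in> {1..n}" and e: "rk n F a = rk n F c"
    show "a = c"
    proof (rule ccontr)
      assume "a \<noteq> c"
      then have "lexlt F a c \<or> lexlt F c a" by (rule lexlt_total)
      then show False using rk_mono[OF a c, of F] rk_mono[OF c a, of F] e by auto
    qed
  qed
  have "rk n F ` {1..n} \<subseteq> {1..n}" using rk_range by auto
  then have "rk n F ` {1..n} = {1..n}" using inj by (intro endo_inj_surj) auto
  then have "bij_betw (rk n F) {1..n} {1..n}" using inj by (simp add: bij_betw_def)
  moreover have "\<forall>x. x \<notin> {1..n} \<longrightarrow> rk n F x = x" unfolding rk_def by simp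
  ultimately show ?thesis by (intro bij_imp_permutes) auto
qed

lemma chain_pairwise:
  assumes "\<forall>k\<in>{1..<n}. lexlt F (\<nu> k) (\<nu> (Suc k))"
  shows "p \<in> {1..n} \<Longrightarrow> q \<le> n \<Longrightarrow> p < q \<Longrightarrow> lexlt F (\<nu> p) (\<nu> q)"
proof (induction q)
  case 0 then show ?case by simp
next
  case (Suc q)
  show ?case
  proof (cases "p = q")
    case True then show ?thesis using assms Suc.prems by auto
  next
    case False
    then have "lexlt F (\<nu> p) (\<nu> q)" using Suc by simp
    moreover have "lexlt F (\<nu> q) (\<nu> (Suc q))" using assms Suc.prems False by auto
    ultimately show ?thesis by (rule lexlt_trans)
  qed
qed

lemma rk_eq_iff:
  assumes pi: "\<pi> permutes {1..n}"
  shows "rk n F = \<pi> \<longleftrightarrow> (\<forall>k\<in>{1..<n}. lexlt F (inv \<pi> k) (inv \<pi> (Suc k)))"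
proof
  assume r: "rk n F = \<pi>"
  show "\<forall>k\<in>{1..<n}. lexlt F (inv \<pi> k) (inv \<pi> (Suc k))"
  proof
    fix k assume k: "k \<in> {1..<n}"
    have ip: "inv \<pi> permutes {1..n}" using pi by (rule permutes_inv)
    have a: "inv \<pi> k \<in> {1..n}" "inv \<pi> (Suc k) \<in> {1..n}"
      using k permutes_in_image[OF ip] by auto
    have "rk n F (inv \<pi> k) < rk n F (inv \<pi> (Suc k))"
      unfolding r using permutes_inverses(1)[OF pi] by simp
    then show "lexlt F (inv \<pi> k) (inv \<pi> (Suc k))" using rk_less_iff[OF a] by simp
  qed
next
  assume ch: "\<forall>k\<in>{1..<n}. lexlt F (inv \<pi> k) (inv \<pi> (Suc k))"
  let ?\<nu> = "inv \<pi>"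
  have ip: "?\<nu> permutes {1..n}" using pi by (rule permutes_inv)
  have pw: "lexlt F (?\<nu> p) (?\<nu> q) \<longleftrightarrow> p < q" if p: "p \<in> {1..n}" and q: "q \<in> {1..n}" for p q
  proof
    assume "p < q" then show "lexlt F (?\<nu> p) (?\<nu> q)" using chain_pairwise[OF ch p] q by auto
  next
    assume l: "lexlt F (?\<nu> p) (?\<nu> q)"
    show "p < q"
    proof (rule ccontr)
      assume "\<not> p < q"
      then have "p = q \<or> q < p" by auto
      then show False
        using l lexlt_irrefl lexlt_asym chain_pairwise[OF ch q, of p] p by auto
    qed
  qed
  show "rk n F = \<pi>"
  proof
    fix m
    show "rk n F m = \<pi> m"
    proof (cases "m \<in> {1..n}")
      case False
      then have "rk n F m = m" unfolding rk_def by (simp only: if_False)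
      then show ?thesis using pi False by (simp add: permutes_not_in)
    next
      case m: True
      define p where "p = \<pi> m"
      have p: "p \<in> {1..n}" unfolding p_def using m permutes_in_image[OF pi] by auto
      have mp: "m = ?\<nu> p" unfolding p_def using permutes_inverses(2)[OF pi] by simp
      have "{m'\<in>{1..n}. lexlt F m' m} = ?\<nu> ` {1..<p}"
      proof
        show "{m'\<in>{1..n}. lexlt F m' m} \<subseteq> ?\<nu> ` {1..<p}"
        proof
          fix m' assume m': "m' \<in> {m'\<in>{1..n}. lexlt F m' m}"
          define q where "q = \<pi> m'"
          have q: "q \<in> {1..n}" unfolding q_def using m' permutes_in_image[OF pi] by auto
          have mq: "m' = ?\<nu> q" unfolding q_def using permutes_inverses(2)[OF pi] by simp
          have "q < p" using pw[OF q p] m' mq mp by simp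
          then show "m' \<in> ?\<nu> ` {1..<p}" using mq q by auto
        qed
      next
        show "?\<nu> ` {1..<p} \<subseteq> {m'\<in>{1..n}. lexlt F m' m}"
        proof
          fix m' assume "m' \<in> ?\<nu> ` {1..<p}"
          then obtain q where q: "q \<in> {1..<p}" and mq: "m' = ?\<nu> q" by blast
          have qq: "q \<in> {1..n}" using q p by auto
          have "lexlt F m' m" using pw[OF qq p] q mq mp by simp
          moreover have "m' \<in> {1..n}" using mq qq permutes_in_image[OF ip] by auto
          ultimately show "m' \<in> {m'\<in>{1..n}. lexlt F m' m}" by simp
        qed
      qed
      moreover have "inj_on ?\<nu> {1..<p}" using permutes_inj_on[OF ip] by (auto simp: inj_on_def)
      ultimately have "card {m'\<in>{1..n}. lexlt F m' m} = p - 1" by (simp add: card_image)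
      then show ?thesis using m p unfolding rk_def p_def by simp
    qed
  qed
qed

lemma restrict_perm_bij:
  assumes "\<nu> permutes {1..n}"
  shows "bij_betw (\<lambda>F. restrict (F \<circ> \<nu>) {1..n}) (FS n b) (FS n b)"
proof (rule bij_betw_byWitness[where f'="\<lambda>G. restrict (G \<circ> inv \<nu>) {1..n}"])
  have ip: "inv \<nu> permutes {1..n}" using assms by (rule permutes_inv)
  show "\<forall>F\<in>FS n b. restrict (restrict (F \<circ> \<nu>) {1..n} \<circ> inv \<nu>) {1..n} = F"
  proof
    fix F assume F: "F \<in> FS n b"
    show "restrict (restrict (F \<circ> \<nu>) {1..n} \<circ> inv \<nu>) {1..n} = F"
    proof
      fix k show "restrict (restrict (F \<circ> \<nu>) {1..n} \<circ> inv \<nu>) {1..n} k = F k"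
        using F permutes_in_image[OF ip] permutes_inverses(1)[OF assms]
        by (cases "k \<in> {1..n}") (auto simp: PiE_def extensional_def)
    qed
  qed
  show "\<forall>F\<in>FS n b. restrict (restrict (F \<circ> inv \<nu>) {1..n} \<circ> \<nu>) {1..n} = F"
  proof
    fix F assume F: "F \<in> FS n b"
    show "restrict (restrict (F \<circ> inv \<nu>) {1..n} \<circ> \<nu>) {1..n} = F"
    proof
      fix k show "restrict (restrict (F \<circ> inv \<nu>) {1..n} \<circ> \<nu>) {1..n} k = F k"
        using F permutes_in_image[OF assms] permutes_inverses(2)[OF assms]
        by (cases "k \<in> {1..n}") (auto simp: PiE_def extensional_def)
    qed
  qed
  show "(\<lambda>F. restrict (F \<circ> \<nu>) {1..n}) ` FS n b \<subseteq> FS n b"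
    using permutes_in_image[OF assms] by (auto simp: PiE_def Pi_def)
  show "(\<lambda>G. restrict (G \<circ> inv \<nu>) {1..n}) ` FS n b \<subseteq> FS n b"
    using permutes_in_image[OF ip] by (auto simp: PiE_def Pi_def)
qed

lemma des_alt: "des n \<sigma> = card {k\<in>{1..<n}. \<sigma> (Suc k) < \<sigma> k}"
proof -
  have "{1..n-1} = {1..<n}" by auto
  then show ?thesis unfolding des_def by simp
qed

lemma fiber_card:
  assumes pi: "\<pi> permutes {1..n}" and n: "1 \<le> n" and b: "0 < b"
  shows "real (card {F\<in>FS n b. rk n F = \<pi>}) = ibinom (int n + int b - int (des n (inv \<pi>)) - 1) n"
proof -
  let ?\<nu> = "inv \<pi>"
  define D where "D k \<longleftrightarrow> ?\<nu> (Suc k) < ?\<nu> k" for k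
  have ip: "?\<nu> permutes {1..n}" using pi by (rule permutes_inv)
  have key: "rk n F = \<pi> \<longleftrightarrow> cmpt n D (restrict (F \<circ> ?\<nu>) {1..n})" for F
  proof -
    have "lexlt F (?\<nu> k) (?\<nu> (Suc k)) \<longleftrightarrow> restrict (F \<circ> ?\<nu>) {1..n} k + ee D k \<le> restrict (F \<circ> ?\<nu>) {1..n} (k+1)"
      if k: "k \<in> {1..<n}" for k
    proof -
      have "?\<nu> k \<noteq> ?\<nu> (Suc k)" using permutes_inj[OF ip] unfolding inj_def by (metis n_not_Suc_n)
      then show ?thesis using k unfolding lexlt_def ee_def D_def by auto
    qed
    then show ?thesis unfolding rk_eq_iff[OF pi] cmpt_def by auto
  qed
  have "real (card {F\<in>FS n b. rk n F = \<pi>}) = (\<Sum>F\<in>FS n b. if rk n F = \<pi> then 1 else 0)"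
    by (rule sum_indicator_card[symmetric, OF FS_finite])
  also have "\<dots> = (\<Sum>F\<in>FS n b. if cmpt n D (restrict (F \<circ> ?\<nu>) {1..n}) then 1 else 0)"
    using key by simp
  also have "\<dots> = (\<Sum>x\<in>FS n b. if cmpt n D x then 1 else 0)"
    by (rule sum.reindex_bij_betw[OF restrict_perm_bij[OF ip], of "\<lambda>x. if cmpt n D x then 1 else 0"])
  also have "\<dots> = real (card {x\<in>FS n b. cmpt n D x})"
    by (rule sum_indicator_card[OF FS_finite])
  also have "\<dots> = ibinom (int n + int b - int (cc D n) - 1) n"
    by (rule cmpt_count[OF n b])
  also have "cc D n = des n ?\<nu>" unfolding cc_def D_def des_alt ..
  finally show ?thesis .
qed

abbreviation PS :: "nat \<Rightarrow> (nat \<Rightarrow> nat) set" where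
  "PS n \<equiv> {\<pi>. \<pi> permutes {1..n}}"

lemma PS_finite: "finite (PS n)" by (rule finite_permutations) simp

lemma WS:
  assumes n: "1 \<le> n" and b: "0 < b"
  shows "(\<Sum>\<pi>\<in>PS n. Qb n b \<pi> * \<Phi> \<pi>) = (\<Sum>F\<in>FS n b. \<Phi> (rk n F)) / real b ^ n"
proof -
  have "(\<Sum>F\<in>FS n b. \<Phi> (rk n F)) = (\<Sum>\<pi>\<in>PS n. \<Sum>F\<in>{F\<in>FS n b. rk n F = \<pi>}. \<Phi> (rk n F))"
    by (rule sum.group[symmetric, OF FS_finite PS_finite]) (use rk_permutes in blast)
  also have "\<dots> = (\<Sum>\<pi>\<in>PS n. real (card {F\<in>FS n b. rk n F = \<pi>}) * \<Phi> \<pi>)"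
    by (intro sum.cong refl) simp
  also have "\<dots> = (\<Sum>\<pi>\<in>PS n. ibinom (int n + int b - int (des n (inv \<pi>)) - 1) n * \<Phi> \<pi>)"
  proof (intro sum.cong refl)
    fix \<pi> assume "\<pi> \<in> PS n"
    then have "\<pi> permutes {1..n}" by blast
    from fiber_card[OF this n b] show "real (card {F\<in>FS n b. rk n F = \<pi>}) * \<Phi> \<pi> = ibinom (int n + int b - int (des n (inv \<pi>)) - 1) n * \<Phi> \<pi>"
      by simp
  qed
  also have "\<dots> = (\<Sum>\<pi>\<in>PS n. Qb n b \<pi> * \<Phi> \<pi>) * real b ^ n"
    using b by (simp add: Qb_def sum_distrib_right)
  finally show ?thesis using b by simp
qed

lemma Qb_sum: "1 \<le> n \<Longrightarrow> 0 < b \<Longrightarrow> (\<Sum>\<pi>\<in>PS n. Qb n b \<pi>) = 1"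
  using WS[of n b "\<lambda>_. 1"] FS_card[of n b] by simp

lemma Qb_nonneg: "0 \<le> Qb n b \<pi>"
  by (simp add: Qb_def ibinom_def)

lemma des_rk_comp:
  assumes r: "\<rho> permutes {1..n}"
  shows "des n (rk n F \<circ> \<rho>) = card {k\<in>{1..<n}. lexd (\<lambda>k. \<rho> (Suc k) < \<rho> k) (restrict (F \<circ> \<rho>) {1..n}) k}"
proof -
  have "rk n F (\<rho> (Suc k)) < rk n F (\<rho> k) \<longleftrightarrow> lexd (\<lambda>k. \<rho> (Suc k) < \<rho> k) (restrict (F \<circ> \<rho>) {1..n}) k"
    if k: "k \<in> {1..<n}" for k
  proof -
    have a: "\<rho> (Suc k) \<in> {1..n}" "\<rho> k \<in> {1..n}" using k permutes_in_image[OF r] by auto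
    show ?thesis unfolding rk_less_iff[OF a] lexlt_def lexd_def using k by auto
  qed
  then show ?thesis unfolding des_alt by (intro arg_cong[where f=card]) auto
qed

lemma key_lemma:
  assumes n: "1 \<le> n" and b: "0 < b" and t: "\<tau>' permutes {1..n}" and j: "des n (inv \<tau>') = j"
  shows "(\<Sum>\<tau>\<in>{\<tau>. \<tau> permutes {1..n} \<and> des n (inv \<tau>) = i}. Qb n b (inv \<tau> \<circ> \<tau>')) = carries n b j i"
proof -
  let ?\<rho> = "inv \<tau>'"
  have r: "?\<rho> permutes {1..n}" using t by (rule permutes_inv)
  define D where "D k \<longleftrightarrow> ?\<rho> (Suc k) < ?\<rho> k" for k
  have "(\<Sum>\<tau>\<in>{\<tau>. \<tau> permutes {1..n} \<and> des n (inv \<tau>) = i}. Qb n b (inv \<tau> \<circ> \<tau>'))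
      = (\<Sum>\<tau>\<in>PS n. Qb n b (inv \<tau> \<circ> \<tau>') * (if des n (inv \<tau>) = i then 1 else 0))"
    by (rule sum.mono_neutral_cong_left[OF PS_finite]) auto
  also have "\<dots> = (\<Sum>\<pi>\<in>PS n. Qb n b \<pi> * (if des n (\<pi> \<circ> ?\<rho>) = i then 1 else 0))"
  proof (rule sum.reindex_bij_witness[where i="\<lambda>\<pi>. \<tau>' \<circ> inv \<pi>" and j="\<lambda>\<tau>. inv \<tau> \<circ> \<tau>'"])
    fix \<tau> assume "\<tau> \<in> PS n"
    then have tt: "\<tau> permutes {1..n}" by simp
    show "\<tau>' \<circ> inv (inv \<tau> \<circ> \<tau>') = \<tau>"
      using tt t by (simp add: o_inv_distrib permutes_bij inv_inv_eq bij_imp_bij_inv permutes_inv_o o_assoc)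
    show "inv \<tau> \<circ> \<tau>' \<in> PS n" using tt t by (simp add: permutes_compose permutes_inv)
    show "Qb n b (inv \<tau> \<circ> \<tau>') * (if des n (inv \<tau> \<circ> \<tau>' \<circ> ?\<rho>) = i then 1 else 0)
        = Qb n b (inv \<tau> \<circ> \<tau>') * (if des n (inv \<tau>) = i then 1 else 0)"
      using t by (simp add: o_assoc[symmetric] permutes_inv_o)
  next
    fix \<pi> assume "\<pi> \<in> PS n"
    then have pp: "\<pi> permutes {1..n}" by simp
    show "inv (\<tau>' \<circ> inv \<pi>) \<circ> \<tau>' = \<pi>"
      using pp t by (simp add: o_inv_distrib permutes_bij inv_inv_eq bij_imp_bij_inv permutes_inv_o o_assoc[symmetric])
    show "\<tau>' \<circ> inv \<pi> \<in> PS n" using pp t by (simp add: permutes_compose permutes_inv)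
  qed
  also have "\<dots> = (\<Sum>F\<in>FS n b. if des n (rk n F \<circ> ?\<rho>) = i then 1 else 0) / real b ^ n"
    by (rule WS[OF n b])
  also have "(\<Sum>F\<in>FS n b. if des n (rk n F \<circ> ?\<rho>) = i then (1::real) else 0)
      = (\<Sum>F\<in>FS n b. if card {k\<in>{1..<n}. lexd D (restrict (F \<circ> ?\<rho>) {1..n}) k} = i then 1 else 0)"
    unfolding D_def des_rk_comp[OF r] ..
  also have "\<dots> = (\<Sum>G\<in>FS n b. if card {k\<in>{1..<n}. lexd D G k} = i then 1 else 0)"
    by (rule sum.reindex_bij_betw[OF restrict_perm_bij[OF r], of "\<lambda>G. if card {k\<in>{1..<n}. lexd D G k} = i then 1 else 0"])
  also have "\<dots> = carries n b j i * real b ^ n"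
    by (rule lex_count[OF b n]) (simp add: D_def j[symmetric] des_alt)
  finally show ?thesis using b by (simp add: comp_def)
qed

definition MS :: "nat \<Rightarrow> nat \<Rightarrow> (nat \<Rightarrow> nat) list set" where
  "MS n m = {ms. length ms = m \<and> (\<forall>\<mu>\<in>set ms. \<mu> permutes {1..n})}"

definition pw :: "nat \<Rightarrow> nat \<Rightarrow> (nat \<Rightarrow> nat) list \<Rightarrow> real" where
  "pw n b ms = (\<Prod>k<length ms. Qb n b (ms ! k))"

definition okp :: "nat \<Rightarrow> nat list \<Rightarrow> (nat \<Rightarrow> nat) list \<Rightarrow> bool" where
  "okp n js ms \<longleftrightarrow> (\<forall>k<length js. des n (inv (tau ms k)) = js ! k)"

definition W :: "nat \<Rightarrow> nat \<Rightarrow> nat list \<Rightarrow> (nat \<Rightarrow> nat) \<Rightarrow> real" where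
  "W n b js \<tau> = (\<Sum>ms\<in>MS n (length js - 1). pw n b ms * (if okp n js ms then 1 else 0) *
      (if tau ms (length ms) = \<tau> then 1 else 0))"

lemma pathprob_alt: "pathprob n b js = (\<Sum>ms\<in>MS n (length js - 1). pw n b ms * (if okp n js ms then 1 else 0))"
  unfolding pathprob_def MS_def pw_def okp_def by simp

lemma MS_finite: "finite (MS n m)"
proof -
  have "MS n m \<subseteq> {ms. set ms \<subseteq> PS n \<and> length ms = m}" unfolding MS_def by auto
  moreover have "finite {ms. set ms \<subseteq> PS n \<and> length ms = m}"
    by (rule finite_lists_length_eq[OF PS_finite])
  ultimately show ?thesis by (rule finite_subset)
qed

lemma tau_0: "tau ms 0 = id" by (simp add: tau_def)

lemma tau_snoc_le: "k \<le> length ms \<Longrightarrow> tau (ms @ [\<mu>]) k = tau ms k"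
  by (simp add: tau_def)

lemma tau_snoc_last: "tau (ms @ [\<mu>]) (Suc (length ms)) = tau ms (length ms) \<circ> \<mu>"
  by (simp add: tau_def)

lemma foldl_comp_permutes: "\<forall>\<mu>\<in>set ms. \<mu> permutes S \<Longrightarrow> f permutes S \<Longrightarrow> foldl (\<circ>) f ms permutes S"
  by (induction ms arbitrary: f) (auto intro: permutes_compose)

lemma tau_permutes: "\<forall>\<mu>\<in>set ms. \<mu> permutes S \<Longrightarrow> tau ms k permutes S"
  unfolding tau_def by (rule foldl_comp_permutes) (auto dest: in_set_takeD intro: permutes_id)

lemma sum_MS_Suc:
  "(\<Sum>ms\<in>MS n (Suc m). h ms) = (\<Sum>ms\<in>MS n m. \<Sum>\<mu>\<in>PS n. h (ms @ [\<mu>]))"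
proof -
  have e: "MS n (Suc m) = (\<lambda>(ms, \<mu>). ms @ [\<mu>]) ` (MS n m \<times> PS n)"
  proof
    show "MS n (Suc m) \<subseteq> (\<lambda>(ms, \<mu>). ms @ [\<mu>]) ` (MS n m \<times> PS n)"
    proof
      fix xs assume xs: "xs \<in> MS n (Suc m)"
      then have "xs \<noteq> []" unfolding MS_def by auto
      then obtain ms \<mu> where "xs = ms @ [\<mu>]" by (metis rev_exhaust)
      then show "xs \<in> (\<lambda>(ms, \<mu>). ms @ [\<mu>]) ` (MS n m \<times> PS n)" using xs unfolding MS_def by force
    qed
  qed (auto simp: MS_def)
  have i: "inj_on (\<lambda>(ms, \<mu>). ms @ [\<mu>]) (MS n m \<times> PS n)"
    by (auto simp: inj_on_def)
  have "(\<Sum>ms\<in>MS n (Suc m). h ms) = (\<Sum>(ms, \<mu>)\<in>MS n m \<times> PS n. h (ms @ [\<mu>]))"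
    unfolding e by (subst sum.reindex[OF i]) (simp add: case_prod_beta)
  also have "\<dots> = (\<Sum>ms\<in>MS n m. \<Sum>\<mu>\<in>PS n. h (ms @ [\<mu>]))"
    by (rule sum.cartesian_product[symmetric])
  finally show ?thesis .
qed

lemma pathprob_W:
  "pathprob n b js = (\<Sum>\<tau>\<in>PS n. W n b js \<tau>)"
proof -
  have "pathprob n b js = (\<Sum>ms\<in>MS n (length js - 1). \<Sum>\<tau>\<in>PS n. pw n b ms * (if okp n js ms then 1 else 0) *
      (if tau ms (length ms) = \<tau> then 1 else 0))"
    unfolding pathprob_alt
  proof (intro sum.cong refl)
    fix ms assume ms: "ms \<in> MS n (length js - 1)"
    have tp: "tau ms (length ms) \<in> PS n" using ms tau_permutes unfolding MS_def by blast
    have "(\<Sum>\<tau>\<in>PS n. (if tau ms (length ms) = \<tau> then (1::real) else 0)) = 1"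
      using tp PS_finite by (simp add: sum.delta)
    then show "pw n b ms * (if okp n js ms then 1 else 0) = (\<Sum>\<tau>\<in>PS n. pw n b ms * (if okp n js ms then 1 else 0) *
      (if tau ms (length ms) = \<tau> then 1 else 0))"
      by (simp add: sum_distrib_left[symmetric])
  qed
  also have "\<dots> = (\<Sum>\<tau>\<in>PS n. W n b js \<tau>)" unfolding W_def by (rule sum.swap)
  finally show ?thesis .
qed

lemma pw_snoc: "pw n b (ms @ [\<mu>]) = pw n b ms * Qb n b \<mu>"
  unfolding pw_def by (simp add: nth_append lessThan_Suc prod.insert)

lemma okp_snoc:
  assumes "js \<noteq> []" "length ms = length js - 1"
  shows "okp n (js @ [j]) (ms @ [\<mu>]) \<longleftrightarrow> okp n js ms \<and> des n (inv (tau ms (length ms) \<circ> \<mu>)) = j"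
proof -
  have L: "length js = Suc (length ms)" using assms by (cases js) auto
  have "okp n (js @ [j]) (ms @ [\<mu>]) \<longleftrightarrow>
     (\<forall>k<Suc (length js). des n (inv (tau (ms @ [\<mu>]) k)) = (js @ [j]) ! k)"
    unfolding okp_def by simp
  also have "\<dots> \<longleftrightarrow> (\<forall>k<length js. des n (inv (tau (ms @ [\<mu>]) k)) = (js @ [j]) ! k)
      \<and> des n (inv (tau (ms @ [\<mu>]) (length js))) = j"
    by (auto simp: less_Suc_eq nth_append)
  also have "(\<forall>k<length js. des n (inv (tau (ms @ [\<mu>]) k)) = (js @ [j]) ! k) \<longleftrightarrow> okp n js ms"
    unfolding okp_def using L by (auto simp: tau_snoc_le nth_append)
  also have "tau (ms @ [\<mu>]) (length js) = tau ms (length ms) \<circ> \<mu>"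
    using L by (simp add: tau_snoc_last)
  finally show ?thesis .
qed

lemma sum_unique_mu:
  fixes h :: "(nat \<Rightarrow> nat) \<Rightarrow> real"
  assumes T: "T permutes {1..n}" and t: "\<tau>' permutes {1..n}"
  shows "(\<Sum>\<mu>\<in>PS n. h \<mu> * (if T \<circ> \<mu> = \<tau>' then 1 else 0)) = h (inv T \<circ> \<tau>')"
proof -
  have m: "inv T \<circ> \<tau>' \<in> PS n" using T t by (simp add: permutes_compose permutes_inv)
  have "T \<circ> \<mu> = \<tau>' \<longleftrightarrow> \<mu> = inv T \<circ> \<tau>'" for \<mu>
  proof
    assume "T \<circ> \<mu> = \<tau>'"
    then have "inv T \<circ> (T \<circ> \<mu>) = inv T \<circ> \<tau>'" by simp
    then show "\<mu> = inv T \<circ> \<tau>'" using T by (simp add: o_assoc permutes_inv_o)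
  next
    assume "\<mu> = inv T \<circ> \<tau>'"
    then show "T \<circ> \<mu> = \<tau>'" using T by (simp add: o_assoc permutes_inv_o)
  qed
  then have "(\<Sum>\<mu>\<in>PS n. h \<mu> * (if T \<circ> \<mu> = \<tau>' then 1 else 0)) = (\<Sum>\<mu>\<in>PS n. if \<mu> = inv T \<circ> \<tau>' then h \<mu> else 0)"
    by (intro sum.cong refl) simp
  also have "\<dots> = h (inv T \<circ> \<tau>')" using m PS_finite by (simp add: sum.delta')
  finally show ?thesis .
qed

lemma W_snoc:
  assumes js: "js \<noteq> []" and t: "\<tau>' permutes {1..n}"
  shows "W n b (js @ [j]) \<tau>' = (if des n (inv \<tau>') = j then 1 else 0) * (\<Sum>\<tau>\<in>PS n. W n b js \<tau> * Qb n b (inv \<tau> \<circ> \<tau>'))"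
proof -
  define m where "m = length js - 1"
  have lm: "length (js @ [j]) - 1 = Suc m" using js unfolding m_def by (cases js) auto
  let ?I = "\<lambda>P. if P then (1::real) else 0"
  have "W n b (js @ [j]) \<tau>' = (\<Sum>ms\<in>MS n m. \<Sum>\<mu>\<in>PS n. pw n b (ms @ [\<mu>]) * ?I (okp n (js @ [j]) (ms @ [\<mu>])) *
      ?I (tau (ms @ [\<mu>]) (length (ms @ [\<mu>])) = \<tau>'))"
    unfolding W_def lm sum_MS_Suc ..
  also have "\<dots> = (\<Sum>ms\<in>MS n m. pw n b ms * ?I (okp n js ms) *
      (\<Sum>\<mu>\<in>PS n. (Qb n b \<mu> * ?I (des n (inv (tau ms (length ms) \<circ> \<mu>)) = j)) * ?I (tau ms (length ms) \<circ> \<mu> = \<tau>')))"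
  proof (intro sum.cong refl)
    fix ms assume ms: "ms \<in> MS n m"
    then have l: "length ms = length js - 1" unfolding MS_def m_def by simp
    show "(\<Sum>\<mu>\<in>PS n. pw n b (ms @ [\<mu>]) * ?I (okp n (js @ [j]) (ms @ [\<mu>])) *
      ?I (tau (ms @ [\<mu>]) (length (ms @ [\<mu>])) = \<tau>')) = pw n b ms * ?I (okp n js ms) *
      (\<Sum>\<mu>\<in>PS n. (Qb n b \<mu> * ?I (des n (inv (tau ms (length ms) \<circ> \<mu>)) = j)) * ?I (tau ms (length ms) \<circ> \<mu> = \<tau>'))"
      unfolding sum_distrib_left
      by (intro sum.cong refl) (simp add: pw_snoc okp_snoc[OF js l] tau_snoc_last)
  qed
  also have "\<dots> = (\<Sum>ms\<in>MS n m. pw n b ms * ?I (okp n js ms) *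
      (Qb n b (inv (tau ms (length ms)) \<circ> \<tau>') * ?I (des n (inv \<tau>') = j)))"
  proof (intro sum.cong refl)
    fix ms assume ms: "ms \<in> MS n m"
    have T: "tau ms (length ms) permutes {1..n}" using ms tau_permutes unfolding MS_def by blast
    have e: "tau ms (length ms) \<circ> (inv (tau ms (length ms)) \<circ> \<tau>') = \<tau>'"
      using T by (simp add: o_assoc permutes_inv_o)
    show "pw n b ms * ?I (okp n js ms) *
      (\<Sum>\<mu>\<in>PS n. (Qb n b \<mu> * ?I (des n (inv (tau ms (length ms) \<circ> \<mu>)) = j)) * ?I (tau ms (length ms) \<circ> \<mu> = \<tau>'))
      = pw n b ms * ?I (okp n js ms) *
      (Qb n b (inv (tau ms (length ms)) \<circ> \<tau>') * ?I (des n (inv \<tau>') = j))"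
      using sum_unique_mu[OF T t, of "\<lambda>\<mu>. Qb n b \<mu> * ?I (des n (inv (tau ms (length ms) \<circ> \<mu>)) = j)"] e
      by simp
  qed
  also have "\<dots> = (\<Sum>ms\<in>MS n m. ?I (des n (inv \<tau>') = j) * (\<Sum>\<tau>\<in>PS n. pw n b ms * ?I (okp n js ms) *
      ?I (tau ms (length ms) = \<tau>) * Qb n b (inv \<tau> \<circ> \<tau>')))"
  proof (intro sum.cong refl)
    fix ms assume ms: "ms \<in> MS n m"
    have T: "tau ms (length ms) \<in> PS n" using ms tau_permutes unfolding MS_def by blast
    have "(\<Sum>\<tau>\<in>PS n. pw n b ms * ?I (okp n js ms) * ?I (tau ms (length ms) = \<tau>) * Qb n b (inv \<tau> \<circ> \<tau>'))
       = (\<Sum>\<tau>\<in>PS n. if \<tau> = tau ms (length ms) then pw n b ms * ?I (okp n js ms) * Qb n b (inv \<tau> \<circ> \<tau>') else 0)"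
      by (intro sum.cong refl) auto
    also have "\<dots> = pw n b ms * ?I (okp n js ms) * Qb n b (inv (tau ms (length ms)) \<circ> \<tau>')"
      using T PS_finite by (simp add: sum.delta')
    finally show "pw n b ms * ?I (okp n js ms) * (Qb n b (inv (tau ms (length ms)) \<circ> \<tau>') * ?I (des n (inv \<tau>') = j))
       = ?I (des n (inv \<tau>') = j) * (\<Sum>\<tau>\<in>PS n. pw n b ms * ?I (okp n js ms) * ?I (tau ms (length ms) = \<tau>) * Qb n b (inv \<tau> \<circ> \<tau>'))"
      by simp
  qed
  also have "\<dots> = ?I (des n (inv \<tau>') = j) * (\<Sum>ms\<in>MS n m. \<Sum>\<tau>\<in>PS n. pw n b ms * ?I (okp n js ms) *
      ?I (tau ms (length ms) = \<tau>) * Qb n b (inv \<tau> \<circ> \<tau>'))"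
    by (rule sum_distrib_left[symmetric])
  also have "\<dots> = ?I (des n (inv \<tau>') = j) * (\<Sum>\<tau>\<in>PS n. W n b js \<tau> * Qb n b (inv \<tau> \<circ> \<tau>'))"
    unfolding W_def m_def by (subst sum.swap) (simp add: sum_distrib_right)
  finally show ?thesis .
qed

definition EE :: "nat \<Rightarrow> nat \<Rightarrow> nat" where
  "EE n j = card {\<tau>\<in>PS n. des n (inv \<tau>) = j}"

lemma EE_eulerian: "EE n j = eulerian n j"
proof -
  have "bij_betw inv {\<sigma>. \<sigma> permutes {1..n} \<and> des n \<sigma> = j} {\<tau>\<in>PS n. des n (inv \<tau>) = j}"
    by (rule bij_betw_byWitness[where f'=inv])
       (auto simp: permutes_inv inv_inv_eq permutes_bij)
  from bij_betw_same_card[OF this] show ?thesis unfolding EE_def eulerian_def by simp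
qed

lemma des_le: "des n \<sigma> \<le> n - 1"
proof -
  have "des n \<sigma> \<le> card {1..n-1}" unfolding des_def by (intro card_mono) auto
  then show ?thesis by simp
qed

lemma des_id: "des n id = 0" unfolding des_def by simp

lemma des0_id:
  assumes p: "\<sigma> permutes {1..n}" and d: "des n \<sigma> = 0"
  shows "\<sigma> = id"
proof -
  have nd: "\<sigma> k < \<sigma> (Suc k)" if "k \<in> {1..<n}" for k
  proof -
    have "{k\<in>{1..<n}. \<sigma> (Suc k) < \<sigma> k} = {}" using d unfolding des_alt by simp
    then have "\<not> \<sigma> (Suc k) < \<sigma> k" using that by auto
    moreover have "\<sigma> (Suc k) \<noteq> \<sigma> k" using permutes_inj[OF p] unfolding inj_def by (metis n_not_Suc_n)
    ultimately show ?thesis by simp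
  qed
  have ge: "1 \<le> k \<longrightarrow> k \<le> n \<longrightarrow> k \<le> \<sigma> k" for k
  proof (induction k)
    case 0 then show ?case by simp
  next
    case (Suc k)
    show ?case
    proof (cases "k = 0")
      case True
      then show ?thesis using permutes_in_image[OF p, of 1] by auto
    next
      case False
      then show ?thesis using Suc nd[of k] by auto
    qed
  qed
  have s: "(\<Sum>k\<in>{1..n}. \<sigma> k) = (\<Sum>k\<in>{1..n}. k)"
    using sum.permute[OF p, of "\<lambda>k. k"] by (simp add: comp_def)
  have eq: "\<sigma> k = k" if k: "k \<in> {1..n}" for k
  proof (rule ccontr)
    assume "\<sigma> k \<noteq> k"
    moreover have "k \<le> \<sigma> k" using ge[of k] k by simp
    ultimately have "k < \<sigma> k" by simp
    have "(\<Sum>k\<in>{1..n}. k) < (\<Sum>k\<in>{1..n}. \<sigma> k)"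
    proof (rule sum_strict_mono_ex1)
      show "\<forall>x\<in>{1..n}. x \<le> \<sigma> x" using ge by simp
      show "\<exists>a\<in>{1..n}. a < \<sigma> a" using k \<open>k < \<sigma> k\<close> by blast
    qed simp
    then show False using s by simp
  qed
  show ?thesis
  proof
    fix x show "\<sigma> x = id x"
      using eq permutes_not_in[OF p] by (cases "x \<in> {1..n}") auto
  qed
qed

lemma EE_0: "EE n 0 = 1"
proof -
  have "{\<tau>\<in>PS n. des n (inv \<tau>) = 0} = {id}"
  proof
    show "{\<tau>\<in>PS n. des n (inv \<tau>) = 0} \<subseteq> {id}"
    proof
      fix \<tau> assume t: "\<tau> \<in> {\<tau>\<in>PS n. des n (inv \<tau>) = 0}"
      then have pt: "\<tau> permutes {1..n}" and d: "des n (inv \<tau>) = 0" by auto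
      have "inv \<tau> = id" by (rule des0_id[OF permutes_inv[OF pt] d])
      moreover have "\<tau> = inv (inv \<tau>)" using pt by (simp add: inv_inv_eq permutes_bij)
      ultimately have "\<tau> = id" by simp
      then show "\<tau> \<in> {id}" by simp
    qed
  qed (auto simp: permutes_id des_id)
  then show ?thesis unfolding EE_def by simp
qed

definition revp :: "nat \<Rightarrow> nat \<Rightarrow> nat \<Rightarrow> nat" where
  "revp n i k = (if k \<in> {1..n} \<and> k \<le> Suc i then Suc (Suc i) - k else k)"

lemma revp_invol: "i < n \<Longrightarrow> revp n i (revp n i k) = k"
  unfolding revp_def by (cases "k \<in> {1..n} \<and> k \<le> Suc i") auto

lemma revp_in: "i < n \<Longrightarrow> k \<in> {1..n} \<Longrightarrow> revp n i k \<in> {1..n}"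
  unfolding revp_def by auto

lemma revp_permutes:
  assumes "i < n"
  shows "revp n i permutes {1..n}"
proof (rule bij_imp_permutes)
  show "bij_betw (revp n i) {1..n} {1..n}"
    by (rule bij_betw_byWitness[where f'="revp n i"]) (use revp_invol[OF assms] revp_in[OF assms] in blast)+
  show "\<And>x. x \<notin> {1..n} \<Longrightarrow> revp n i x = x" unfolding revp_def by auto
qed

lemma revp_desc_iff:
  assumes "i < n" "k \<in> {1..<n}"
  shows "revp n i (Suc k) < revp n i k \<longleftrightarrow> k \<in> {1..i}"
proof (cases "k \<le> i")
  case True
  then have "revp n i (Suc k) = Suc i - k" "revp n i k = Suc (Suc i) - k"
    using assms unfolding revp_def by auto
  then show ?thesis using True assms by auto
next
  case False
  then have "revp n i (Suc k) = Suc k" using assms unfolding revp_def by auto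
  moreover have "revp n i k \<le> k" using assms False unfolding revp_def by auto
  ultimately show ?thesis using False by auto
qed

lemma revp_des:
  assumes "i < n"
  shows "des n (revp n i) = i"
proof -
  have "{k\<in>{1..<n}. revp n i (Suc k) < revp n i k} = {1..i}"
    using revp_desc_iff[OF assms] assms by auto
  then show ?thesis unfolding des_alt by simp
qed

lemma EE_pos: "i < n \<Longrightarrow> 0 < EE n i"
proof -
  assume i: "i < n"
  have "inv (revp n i) \<in> {\<tau>\<in>PS n. des n (inv \<tau>) = i}"
    using revp_permutes[OF i] revp_des[OF i]
    by (simp add: permutes_inv inv_inv_eq permutes_bij)
  moreover have "finite {\<tau>\<in>PS n. des n (inv \<tau>) = i}" using PS_finite by simp
  ultimately show ?thesis unfolding EE_def by (metis card_gt_0_iff empty_iff)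
qed

lemma sum_if_const:
  "finite A \<Longrightarrow> (\<Sum>x\<in>A. if P x then (C::real) else 0) = real (card {x\<in>A. P x}) * C"
proof -
  assume f: "finite A"
  have "(\<Sum>x\<in>A. if P x then C else 0) = (\<Sum>x\<in>A. (if P x then 1 else 0) * C)"
    by (intro sum.cong refl) simp
  also have "\<dots> = (\<Sum>x\<in>A. if P x then 1 else 0) * C" by (simp add: sum_distrib_right)
  also have "(\<Sum>x\<in>A. if P x then (1::real) else 0) = real (card {x\<in>A. P x})" by (rule sum_indicator_card[OF f])
  finally show ?thesis .
qed

lemma W_next:
  assumes n: "1 \<le> n" and b: "0 < b" and js: "js \<noteq> []"
    and H: "\<forall>\<tau>\<in>PS n. W n b js \<tau> = (if des n (inv \<tau>) = last js then pathprob n b js / EE n (last js) else 0)"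
    and t: "\<tau>' \<in> PS n"
  shows "W n b (js @ [j]) \<tau>' = (if des n (inv \<tau>') = j then pathprob n b js / EE n (last js) * carries n b j (last js) else 0)"
proof -
  let ?c = "pathprob n b js / EE n (last js)"
  have t': "\<tau>' permutes {1..n}" using t by simp
  have "(\<Sum>\<tau>\<in>PS n. W n b js \<tau> * Qb n b (inv \<tau> \<circ> \<tau>')) = (\<Sum>\<tau>\<in>PS n. ?c * (if des n (inv \<tau>) = last js then Qb n b (inv \<tau> \<circ> \<tau>') else 0))"
    by (intro sum.cong refl) (simp add: H)
  also have "\<dots> = ?c * (\<Sum>\<tau>\<in>PS n. if des n (inv \<tau>) = last js then Qb n b (inv \<tau> \<circ> \<tau>') else 0)"
    by (simp add: sum_distrib_left)
  also have "(\<Sum>\<tau>\<in>PS n. if des n (inv \<tau>) = last js then Qb n b (inv \<tau> \<circ> \<tau>') else 0)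
      = (\<Sum>\<tau>\<in>{\<tau>. \<tau> permutes {1..n} \<and> des n (inv \<tau>) = last js}. Qb n b (inv \<tau> \<circ> \<tau>'))"
    by (rule sum.mono_neutral_cong_right[OF PS_finite]) auto
  also have "\<dots> = carries n b (des n (inv \<tau>')) (last js)"
    by (rule key_lemma[OF n b t' refl])
  finally have S: "(\<Sum>\<tau>\<in>PS n. W n b js \<tau> * Qb n b (inv \<tau> \<circ> \<tau>')) = ?c * carries n b (des n (inv \<tau>')) (last js)" .
  show ?thesis unfolding W_snoc[OF js t'] S by simp
qed

lemma pathprob_next:
  assumes n: "1 \<le> n" and b: "0 < b" and js: "js \<noteq> []"
    and H: "\<forall>\<tau>\<in>PS n. W n b js \<tau> = (if des n (inv \<tau>) = last js then pathprob n b js / EE n (last js) else 0)"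
  shows "pathprob n b (js @ [j]) = real (EE n j) * (pathprob n b js / EE n (last js) * carries n b j (last js))"
proof -
  have "pathprob n b (js @ [j]) = (\<Sum>\<tau>'\<in>PS n. W n b (js @ [j]) \<tau>')" by (rule pathprob_W)
  also have "\<dots> = (\<Sum>\<tau>'\<in>PS n. if des n (inv \<tau>') = j then pathprob n b js / EE n (last js) * carries n b j (last js) else 0)"
    by (intro sum.cong refl) (rule W_next[OF n b js H])
  also have "\<dots> = real (EE n j) * (pathprob n b js / EE n (last js) * carries n b j (last js))"
    unfolding EE_def by (rule sum_if_const[OF PS_finite])
  finally show ?thesis .
qed

lemma MS_0: "MS n 0 = {[]}" by (auto simp: MS_def)

lemma W_form:
  assumes n: "1 \<le> n" and b: "0 < b"
  shows "js \<noteq> [] \<Longrightarrow> \<forall>\<tau>\<in>PS n. W n b js \<tau> = (if des n (inv \<tau>) = last js then pathprob n b js / EE n (last js) else 0)"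
proof (induction js rule: rev_induct)
  case Nil then show ?case by simp
next
  case (snoc j js)
  show ?case
  proof (cases "js = []")
    case True
    have Wb: "W n b [j] \<tau> = (if 0 = j then 1 else 0) * (if id = \<tau> then 1 else 0)" for \<tau>
      unfolding W_def by (simp add: MS_0 pw_def okp_def tau_0 des_id)
    have Pb: "pathprob n b [j] = (if 0 = j then 1 else 0)"
      unfolding pathprob_alt by (simp add: MS_0 pw_def okp_def tau_0 des_id)
    show ?thesis
    proof
      fix \<tau> assume t: "\<tau> \<in> PS n"
      then have pt: "\<tau> permutes {1..n}" by simp
      show "W n b (js @ [j]) \<tau> = (if des n (inv \<tau>) = last (js @ [j]) then pathprob n b (js @ [j]) / EE n (last (js @ [j])) else 0)"
      proof (cases "des n (inv \<tau>) = j")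
        case True
        show ?thesis
        proof (cases "j = 0")
          case j0: True
          have "inv \<tau> = id" using des0_id[OF permutes_inv[OF pt]] True j0 by simp
          moreover have "\<tau> = inv (inv \<tau>)" using pt by (simp add: inv_inv_eq permutes_bij)
          ultimately have "\<tau> = id" by simp
          then show ?thesis using \<open>js = []\<close> j0 Wb Pb by (simp add: EE_0 des_id)
        next
          case False
          then show ?thesis using \<open>js = []\<close> Wb Pb by simp
        qed
      next
        case False
        then have "\<not> (0 = j \<and> id = \<tau>)" by (auto simp: des_id)
        then show ?thesis using \<open>js = []\<close> Wb False by auto
      qed
    qed
  next
    case False
    have H: "\<forall>\<tau>\<in>PS n. W n b js \<tau> = (if des n (inv \<tau>) = last js then pathprob n b js / EE n (last js) else 0)"
      using snoc False by simp
    show ?thesis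
    proof
      fix \<tau> assume t: "\<tau> \<in> PS n"
      show "W n b (js @ [j]) \<tau> = (if des n (inv \<tau>) = last (js @ [j]) then pathprob n b (js @ [j]) / EE n (last (js @ [j])) else 0)"
      proof (cases "des n (inv \<tau>) = j")
        case True
        have "0 < EE n j"
        proof -
          have "\<tau> \<in> {\<tau>\<in>PS n. des n (inv \<tau>) = j}" using t True by simp
          moreover have "finite {\<tau>\<in>PS n. des n (inv \<tau>) = j}" using PS_finite by simp
          ultimately show ?thesis unfolding EE_def by (metis card_gt_0_iff empty_iff)
        qed
        then show ?thesis unfolding W_next[OF n b False H t] pathprob_next[OF n b False H] using True by simp
      next
        case F: False
        show ?thesis unfolding W_next[OF n b False H t] using F by simp
      qed
    qed
  qed
qed

lemma carries_nonneg: "0 < b \<Longrightarrow> 0 \<le> carries n b j i"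
proof -
  assume b: "0 < b"
  have "0 \<le> carries n b j i * real b ^ n"
    unfolding carries_count[OF b] by (intro sum_nonneg) simp
  moreover have "0 < real b ^ n" using b by simp
  ultimately show ?thesis by (simp add: zero_le_mult_iff)
qed

lemma sum_list_le: "\<forall>x\<in>set xs. x \<le> c \<Longrightarrow> sum_list xs \<le> length xs * c"
  by (induction xs) auto

lemma carries_rowsum:
  assumes n: "1 \<le> n" and b: "0 < b" and j: "j < n"
  shows "(\<Sum>i<n. carries n b j i) = 1"
proof -
  have "(\<Sum>i<n. carries n b j i) * real b ^ n = (\<Sum>i<n. carries n b j i * real b ^ n)"
    by (simp add: sum_distrib_right)
  also have "\<dots> = (\<Sum>i<n. \<Sum>xs\<in>Ls b n. if (j + sum_list xs) div b = i then 1 else 0)"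
    using carries_count[OF b] by simp
  also have "\<dots> = (\<Sum>xs\<in>Ls b n. \<Sum>i<n. if (j + sum_list xs) div b = i then 1 else 0)"
    by (rule sum.swap)
  also have "\<dots> = (\<Sum>xs\<in>Ls b n. 1)"
  proof (intro sum.cong refl)
    fix xs assume xs: "xs \<in> Ls b n"
    have "\<forall>x\<in>set xs. x \<le> b - 1" using xs unfolding Ls_def by auto
    then have "sum_list xs \<le> length xs * (b - 1)" by (rule sum_list_le)
    then have "sum_list xs \<le> n * (b - 1)" using xs unfolding Ls_def by simp
    moreover have "n * (b - 1) + n = n * b" using b by (cases b) auto
    ultimately have "j + sum_list xs < n * b" using j by linarith
    then have "(j + sum_list xs) div b < n" using b by (simp add: div_less_iff_less_mult)
    then show "(\<Sum>i<n. if (j + sum_list xs) div b = i then 1 else 0) = (1::real)"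
      by (simp add: sum.delta)
  qed
  also have "\<dots> = real b ^ n" by (simp add: Ls_card)
  finally show ?thesis using b by simp
qed

lemma Qb_shift_sum:
  assumes n: "1 \<le> n" and b: "0 < b" and t: "\<tau> permutes {1..n}"
  shows "(\<Sum>\<tau>'\<in>PS n. Qb n b (inv \<tau> \<circ> \<tau>')) = 1"
proof -
  have "(\<Sum>\<tau>'\<in>PS n. Qb n b (inv \<tau> \<circ> \<tau>')) = (\<Sum>\<pi>\<in>PS n. Qb n b \<pi>)"
  proof (rule sum.reindex_bij_witness[where i="\<lambda>\<pi>. \<tau> \<circ> \<pi>" and j="\<lambda>\<tau>'. inv \<tau> \<circ> \<tau>'"])
    fix \<tau>' assume "\<tau>' \<in> PS n"
    then have p: "\<tau>' permutes {1..n}" by simp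
    show "\<tau> \<circ> (inv \<tau> \<circ> \<tau>') = \<tau>'" using t by (simp add: o_assoc permutes_inv_o)
    show "inv \<tau> \<circ> \<tau>' \<in> PS n" using t p by (simp add: permutes_compose permutes_inv)
  next
    fix \<pi> assume "\<pi> \<in> PS n"
    then have p: "\<pi> permutes {1..n}" by simp
    show "inv \<tau> \<circ> (\<tau> \<circ> \<pi>) = \<pi>" using t by (simp add: o_assoc permutes_inv_o)
    show "\<tau> \<circ> \<pi> \<in> PS n" using t p by (simp add: permutes_compose)
  qed simp
  also have "\<dots> = 1" by (rule Qb_sum[OF n b])
  finally show ?thesis .
qed

lemma rowsum_aux:
  assumes n: "1 \<le> n" and b: "0 < b"
  shows "(\<Sum>j<n. real (EE n j) * carries n b j i) = real (EE n i)"
proof -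
  let ?C = "\<lambda>j. {\<tau>\<in>PS n. des n (inv \<tau>) = j}"
  have "(\<Sum>j<n. real (EE n j) * carries n b j i) = (\<Sum>j<n. \<Sum>\<tau>'\<in>?C j. carries n b (des n (inv \<tau>')) i)"
  proof (intro sum.cong refl)
    fix j
    have "(\<Sum>\<tau>'\<in>?C j. carries n b (des n (inv \<tau>')) i) = (\<Sum>\<tau>'\<in>?C j. carries n b j i)"
      by (intro sum.cong refl) simp
    also have "\<dots> = real (EE n j) * carries n b j i" unfolding EE_def by simp
    finally show "real (EE n j) * carries n b j i = (\<Sum>\<tau>'\<in>?C j. carries n b (des n (inv \<tau>')) i)" by linarith
  qed
  also have "\<dots> = (\<Sum>\<tau>'\<in>PS n. carries n b (des n (inv \<tau>')) i)"
  proof (rule sum.group[OF PS_finite])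
    show "finite {..<n}" by simp
    show "(\<lambda>\<tau>. des n (inv \<tau>)) ` PS n \<subseteq> {..<n}"
    proof (rule image_subsetI)
      fix \<tau> :: "nat \<Rightarrow> nat"
      have "des n (inv \<tau>) \<le> n - 1" by (rule des_le)
      then show "des n (inv \<tau>) \<in> {..<n}" using n by simp
    qed
  qed
  also have "\<dots> = (\<Sum>\<tau>'\<in>PS n. \<Sum>\<tau>\<in>{\<tau>. \<tau> permutes {1..n} \<and> des n (inv \<tau>) = i}. Qb n b (inv \<tau> \<circ> \<tau>'))"
    by (intro sum.cong refl) (rule key_lemma[OF n b _ refl, symmetric], simp)
  also have "\<dots> = (\<Sum>\<tau>\<in>{\<tau>. \<tau> permutes {1..n} \<and> des n (inv \<tau>) = i}. \<Sum>\<tau>'\<in>PS n. Qb n b (inv \<tau> \<circ> \<tau>'))"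
    by (rule sum.swap)
  also have "\<dots> = (\<Sum>\<tau>\<in>{\<tau>. \<tau> permutes {1..n} \<and> des n (inv \<tau>) = i}. 1)"
    by (intro sum.cong refl) (rule Qb_shift_sum[OF n b], simp)
  also have "\<dots> = real (EE n i)" unfolding EE_def by simp
  finally show ?thesis .
qed

lemma pathprob_support:
  assumes n: "1 \<le> n" and p: "pathprob n b js \<noteq> 0"
  shows "set js \<subseteq> {..<n}"
proof -
  obtain ms where "ms \<in> MS n (length js - 1)" and "pw n b ms * (if okp n js ms then 1 else 0) \<noteq> 0"
    using p unfolding pathprob_alt by (meson sum.not_neutral_contains_not_neutral)
  then have ok: "okp n js ms" by (auto split: if_splits)
  show ?thesis
  proof
    fix x assume "x \<in> set js"
    then obtain k where k: "k < length js" "js ! k = x" by (auto simp: in_set_conv_nth)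
    then have "x = des n (inv (tau ms k))" using ok unfolding okp_def by auto
    moreover have "des n (inv (tau ms k)) \<le> n - 1" by (rule des_le)
    ultimately show "x \<in> {..<n}" using n by simp
  qed
qed

lemma EE_zero: "n \<le> j \<Longrightarrow> 1 \<le> n \<Longrightarrow> EE n j = 0"
proof -
  assume a: "n \<le> j" "1 \<le> n"
  have e: "{\<tau>\<in>PS n. des n (inv \<tau>) = j} = {}"
  proof -
    have "des n (inv \<tau>) \<noteq> j" for \<tau>
    proof -
      have "des n (inv \<tau>) \<le> n - 1" by (rule des_le)
      then show ?thesis using a by simp
    qed
    then show ?thesis by blast
  qed
  show ?thesis unfolding EE_def e by simp
qed

lemma pi_eul_EE: "pi_eul n j = real (EE n j) / fact n"
  unfolding pi_eul_def EE_eulerian ..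

theorem theorem2p2:
  fixes n b :: nat
  assumes "n \<ge> 2" and "b \<ge> 2"
  shows "\<exists>K :: nat \<Rightarrow> nat \<Rightarrow> real.
     (\<forall>i j. 0 \<le> K i j) \<and>
     (\<forall>i<n. (\<Sum>j<n. K i j) = 1) \<and>
     (\<forall>js. pathprob n b js \<noteq> 0 \<longrightarrow> set js \<subseteq> {..<n}) \<and>
     (\<forall>js j. js \<noteq> [] \<longrightarrow> pathprob n b (js @ [j]) = pathprob n b js * K (last js) j) \<and>
     (\<forall>j<n. (\<Sum>i<n. pi_eul n i * K i j) = pi_eul n j) \<and>
     (\<forall>i<n. \<forall>j<n. K i j = pi_eul n j * carries n b j i / pi_eul n i)"
proof -
  have n: "1 \<le> n" and b: "0 < b" using assms by auto
  define K where "K i j = (if i < n \<and> j < n then pi_eul n j * carries n b j i / pi_eul n i else 0)" for i j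
  have Kalt: "K i j = real (EE n j) * carries n b j i / real (EE n i)" if "i < n" "j < n" for i j
  proof -
    have "fact n \<noteq> (0::real)" by simp
    then show ?thesis unfolding K_def pi_eul_EE using that by (simp add: field_simps)
  qed
  have EEpos: "0 < real (EE n i)" if "i < n" for i using EE_pos[OF that] by simp
  have c1: "\<forall>i j. 0 \<le> K i j"
    unfolding K_def pi_eul_def by (auto intro!: divide_nonneg_nonneg mult_nonneg_nonneg carries_nonneg[OF b])
  have c2: "\<forall>i<n. (\<Sum>j<n. K i j) = 1"
  proof (intro allI impI)
    fix i assume i: "i < n"
    have "(\<Sum>j<n. K i j) = (\<Sum>j<n. real (EE n j) * carries n b j i) / real (EE n i)"
      by (simp add: Kalt i sum_divide_distrib)
    also have "\<dots> = 1" using rowsum_aux[OF n b, of i] EEpos[OF i] by simp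
    finally show "(\<Sum>j<n. K i j) = 1" .
  qed
  have c3: "\<forall>js. pathprob n b js \<noteq> 0 \<longrightarrow> set js \<subseteq> {..<n}"
    using pathprob_support[OF n] by blast
  have c4: "\<forall>js j. js \<noteq> [] \<longrightarrow> pathprob n b (js @ [j]) = pathprob n b js * K (last js) j"
  proof (intro allI impI)
    fix js :: "nat list" and j :: nat assume js: "js \<noteq> []"
    have H: "\<forall>\<tau>\<in>PS n. W n b js \<tau> = (if des n (inv \<tau>) = last js then pathprob n b js / EE n (last js) else 0)"
      by (rule W_form[OF n b js])
    have P: "pathprob n b (js @ [j]) = real (EE n j) * (pathprob n b js / EE n (last js) * carries n b j (last js))"
      by (rule pathprob_next[OF n b js H])
    show "pathprob n b (js @ [j]) = pathprob n b js * K (last js) j"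
    proof (cases "pathprob n b js = 0")
      case True then show ?thesis using P by simp
    next
      case False
      then have "set js \<subseteq> {..<n}" using c3 by blast
      moreover have "last js \<in> set js" using js by simp
      ultimately have l: "last js < n" by auto
      show ?thesis
      proof (cases "j < n")
        case True
        then show ?thesis using P Kalt[OF l True] by simp
      next
        case False
        then have "EE n j = 0" using EE_zero n by simp
        then show ?thesis using P False unfolding K_def by simp
      qed
    qed
  qed
  have c5: "\<forall>j<n. (\<Sum>i<n. pi_eul n i * K i j) = pi_eul n j"
  proof (intro allI impI)
    fix j assume j: "j < n"
    have "(\<Sum>i<n. pi_eul n i * K i j) = (\<Sum>i<n. pi_eul n j * carries n b j i)"
    proof (intro sum.cong refl)
      fix i assume "i \<in> {..<n}"
      then have i: "i < n" by simp
      have "pi_eul n i \<noteq> 0" unfolding pi_eul_EE using EEpos[OF i] by simp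
      then show "pi_eul n i * K i j = pi_eul n j * carries n b j i"
        unfolding K_def using i j by simp
    qed
    also have "\<dots> = pi_eul n j * (\<Sum>i<n. carries n b j i)" by (simp add: sum_distrib_left)
    also have "\<dots> = pi_eul n j" using carries_rowsum[OF n b j] by simp
    finally show "(\<Sum>i<n. pi_eul n i * K i j) = pi_eul n j" .
  qed
  have c6: "\<forall>i<n. \<forall>j<n. K i j = pi_eul n j * carries n b j i / pi_eul n i"
    unfolding K_def by simp
  show ?thesis using c1 c2 c3 c4 c5 c6 by blast
qed

end
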